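(* Let $d\ge1$, $n\ge1$, and let $X=(X_1,\dots,X_n)$ be a random vector with independent components satisfying $\mathbb{E}[X_i]=0$ for all $i$, such that there exist $\alpha>2$ and $b>0$ with $\mathbb{P}(|X_i|\ge t)\le (b/t)^\alpha$ for all $t\ge b$ and all $i=1,\dots,n$. Let $A=(a_{i_1\dots i_d})\in\mathbb{R}^{n^d}$ be a tensor with generalized diagonal $0$, and set $$f_{d,A}(X):=\sum_{i_1,\dots,i_d=1}^n a_{i_1\dots i_d}X_{i_1}\cdots X_{i_d}.$$ Then there is a constant $C_{d,\alpha}>0$ depending only on $d$ and $\alpha$ such that $$\|f_{d,A}(X)\|_{L^p}\le C_{d,\alpha}\,\|A\|_{\mathrm{HS}}\,b^d\Big(\frac{\alpha}{\alpha-p}\Big)^{d/p}$$ for all $p\in[2,\alpha)$, and $$\mathbb{P}(|f_{d,A}(X)|\ge t)\le C_{d,\alpha}\log^d\Big(\frac{t}{\|A\|_{\mathrm{HS}}b^d}\Big)\Big(\frac{\|A\|_{\mathrm{HS}}b^d}{t}\Big)^\alpha$$ for all $t\ge C_{d,\alpha}\|A\|_{\mathrm{HS}}b^d$.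
   Context: $\|Z\|_{L^p}:=(\mathbb{E}|Z|^p)^{1/p}$. A tensor $A=(a_{i_1\dots i_d})$ has generalized diagonal $0$ if $a_{i_1\dots i_d}=0$ whenever $i_j=i_{j'}$ for some $j\ne j'$. $\|A\|_{\mathrm{HS}}:=\big(\sum_{i_1,\dots,i_d}a_{i_1\dots i_d}^2\big)^{1/2}$ is the Hilbert–Schmidt norm. *)

theory Defs
  imports "HOL-Probability.Probability"
begin

definition tensor_indices :: "nat \<Rightarrow> nat \<Rightarrow> nat list set" where
  "tensor_indices n d = {is. length is = d \<and> set is \<subseteq> {..<n}}"

definition gen_diag_zero :: "nat \<Rightarrow> nat \<Rightarrow> (nat list \<Rightarrow> real) \<Rightarrow> bool" where
  "gen_diag_zero n d A \<longleftrightarrow> (\<forall>is\<in>tensor_indices n d. \<not> distinct is \<longrightarrow> A is = 0)"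

definition hs_norm :: "nat \<Rightarrow> nat \<Rightarrow> (nat list \<Rightarrow> real) \<Rightarrow> real" where
  "hs_norm n d A = sqrt (\<Sum>is\<in>tensor_indices n d. (A is)\<^sup>2)"

definition chaos :: "nat \<Rightarrow> nat \<Rightarrow> (nat list \<Rightarrow> real) \<Rightarrow> (nat \<Rightarrow> 'a \<Rightarrow> real) \<Rightarrow> 'a \<Rightarrow> real" where
  "chaos n d A X \<omega> = (\<Sum>is\<in>tensor_indices n d. A is * (\<Prod>j<d. X (is ! j) \<omega>))"

definition Lp_norm :: "'a measure \<Rightarrow> real \<Rightarrow> ('a \<Rightarrow> real) \<Rightarrow> real" where
  "Lp_norm M p Z = (integral\<^sup>L M (\<lambda>\<omega>. \<bar>Z \<omega>\<bar> powr p)) powr (1 / p)"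

end

theory Submission
  imports Defs "HOL-Probability.Probability"
begin


definition Lc :: "real \<Rightarrow> real" where
  "Lc a = 3 powr a + a * 2 powr a + a^2 * 2 powr a"

definition phi :: "real \<Rightarrow> real \<Rightarrow> real" where "phi p s = \<bar>s\<bar> powr p / s"
definition ww :: "real \<Rightarrow> real \<Rightarrow> real" where "ww p s = \<bar>s\<bar> powr p / s^2"

lemma taylor_aux:
  fixes p x :: real
  assumes p: "2 \<le> p" and x: "\<bar>x\<bar> \<le> 1/2"
  shows "(1+x) powr p \<le> 1 + p*x + p*(p-1) * 2 powr p * x^2"
proof (cases "x = 0")
  case True then show ?thesis by simp
next
  case False
  define diff where "diff = (\<lambda>m::nat. \<lambda>t::real. if m = 0 then (1+t) powr p
     else if m = 1 then p * (1+t) powr (p-1) else p*(p-1)*(1+t) powr (p-2))"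
  have D: "\<forall>m t. m < 2 \<and> -1/2 \<le> t \<and> t \<le> 1/2 \<longrightarrow> DERIV (diff m) t :> diff (Suc m) t"
  proof (intro allI impI)
    fix m :: nat and t :: real assume a: "m < 2 \<and> -1/2 \<le> t \<and> t \<le> 1/2"
    then have t: "0 < 1 + t" by simp
    have d1: "((\<lambda>t. (1+t) powr p) has_real_derivative p * (1+t) powr (p-1)) (at t)"
      using t by (auto intro!: derivative_eq_intros)
    have d2: "((\<lambda>t. p*(1+t) powr (p-1)) has_real_derivative p*((p-1) * (1+t) powr (p-1-1))) (at t)"
      using t by (auto intro!: derivative_eq_intros)
    from a have "m = 0 \<or> m = 1" by auto
    then show "DERIV (diff m) t :> diff (Suc m) t"
    proof
      assume "m = 0" then show ?thesis using d1 by (simp add: diff_def)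
    next
      assume "m = 1" then show ?thesis using d2 by (simp add: diff_def algebra_simps)
    qed
  qed
  obtain t where t: "(if x < 0 then x < t \<and> t < 0 else 0 < t \<and> t < x)"
    and eq: "diff 0 x = (\<Sum>m<2. (diff m 0 / fact m) * (x - 0)^m) + (diff 2 t / fact 2) * (x - 0)^2"
  proof -
    have "-1/2 \<le> x" "x \<le> 1/2" using x by auto
    from Taylor[of 2 diff "diff 0" "-1/2" "1/2" 0 x, OF _ _ D _ _ this False]
    show ?thesis using that by auto
  qed
  have tb: "\<bar>t\<bar> \<le> 1/2" using t x by (auto split: if_splits)
  have e: "(1+x) powr p = 1 + p * x + p*(p-1)*(1+t) powr (p-2) / 2 * x^2"
    using eq by (simp add: diff_def numeral_2_eq_2 lessThan_Suc)
  have "(1+t) powr (p-2) \<le> 2 powr (p - 2)"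
    using tb p by (intro powr_mono2) auto
  also have "\<dots> \<le> 2 powr p" by (intro powr_mono) auto
  finally have "(1+t) powr (p-2) \<le> 2 powr p" .
  then have "p*(p-1)*(1+t) powr (p-2) / 2 * x^2 \<le> p*(p-1)*2 powr p * x^2"
  proof -
    have a: "p*(p-1)*(1+t) powr (p-2) \<le> p*(p-1)*2 powr p"
      using p \<open>(1+t) powr (p-2) \<le> 2 powr p\<close> by (intro mult_left_mono) auto
    have "0 \<le> p*(p-1)*(1+t) powr (p-2)" using p by auto
    with a have "p*(p-1)*(1+t) powr (p-2) / 2 \<le> p*(p-1)*2 powr p" by linarith
    then show ?thesis by (intro mult_right_mono) auto
  qed
  then show ?thesis using e by linarith
qed

lemma Lc_ge: "2 \<le> p \<Longrightarrow> p \<le> a \<Longrightarrow> p*(p-1)*2 powr p \<le> Lc a \<and> 3 powr p + p * 2 powr p \<le> Lc a \<and> 1 \<le> Lc a"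
proof -
  assume p: "2 \<le> p" "p \<le> a"
  have A: "2 powr p \<le> 2 powr a" "3 powr p \<le> 3 powr a" using p by auto
  have B: "p*(p-1) \<le> a^2" using p by (simp add: power2_eq_square mult_mono)
  have "p*(p-1)*2 powr p \<le> a^2 * 2 powr a" using A B p by (intro mult_mono) auto
  moreover have "p * 2 powr p \<le> a * 2 powr a" using A p by (intro mult_mono) auto
  moreover have "1 \<le> 3 powr a" using p by (intro ge_one_powr_ge_zero) auto
  moreover have "0 \<le> a * 2 powr a" "0 \<le> a^2 * 2 powr a" using p by auto
  ultimately show ?thesis unfolding Lc_def using A by linarith
qed

lemma pw_pos:
  fixes p s y :: real
  assumes p: "2 \<le> p" "p \<le> a" and s: "s > 0" and y: "\<bar>y\<bar> \<le> s/2"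
  shows "\<bar>s+y\<bar> powr p \<le> \<bar>s\<bar> powr p + p * phi p s * y + Lc a * (ww p s * y^2 + \<bar>y\<bar> powr p)"
proof -
  define x where "x = y / s"
  have x: "\<bar>x\<bar> \<le> 1/2" using y s by (simp add: x_def abs_div divide_le_eq)
  have sy: "s + y = s * (1 + x)" using s by (simp add: x_def field_simps)
  have "\<bar>s+y\<bar> powr p = s powr p * (1+x) powr p"
    using s x by (simp add: sy abs_mult powr_mult)
  also have "\<dots> \<le> s powr p * (1 + p*x + p*(p-1) * 2 powr p * x^2)"
    using taylor_aux[OF p(1) x] s by (intro mult_left_mono) auto
  also have "\<dots> = s powr p + p * phi p s * y + p*(p-1) * 2 powr p * (ww p s * y^2)"
    using s by (simp add: phi_def ww_def x_def field_simps power2_eq_square)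
  also have "\<dots> \<le> s powr p + p * phi p s * y + Lc a * (ww p s * y^2 + \<bar>y\<bar> powr p)"
  proof -
    have w: "0 \<le> ww p s * y^2" by (simp add: ww_def)
    have "p*(p-1) * 2 powr p * (ww p s * y^2) \<le> Lc a * (ww p s * y^2)"
      using Lc_ge[OF p] w by (intro mult_right_mono) auto
    also have "\<dots> \<le> Lc a * (ww p s * y^2 + \<bar>y\<bar> powr p)"
      using Lc_ge[OF p] by (intro mult_left_mono) auto
    finally show ?thesis by simp
  qed
  finally show ?thesis using s by simp
qed

lemma pw_ineq:
  fixes p s y :: real
  assumes p: "2 \<le> p" "p \<le> a"
  shows "\<bar>s+y\<bar> powr p \<le> \<bar>s\<bar> powr p + p * phi p s * y + Lc a * (ww p s * y^2 + \<bar>y\<bar> powr p)"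
proof -
  have L: "3 powr p + p * 2 powr p \<le> Lc a" "1 \<le> Lc a" using Lc_ge[OF p] by auto
  have w: "0 \<le> ww p s * y^2" by (simp add: ww_def)
  consider "s = 0" | "s \<noteq> 0" "\<bar>y\<bar> \<le> \<bar>s\<bar>/2" | "s \<noteq> 0" "\<bar>y\<bar> > \<bar>s\<bar>/2" by linarith
  then show ?thesis
  proof cases
    case 1
    have "\<bar>y\<bar> powr p \<le> Lc a * \<bar>y\<bar> powr p" using L by (simp add: mult_le_cancel_right1)
    then show ?thesis using 1 by (simp add: phi_def ww_def)
  next
    case 2
    show ?thesis
    proof (cases "s > 0")
      case True then show ?thesis using pw_pos[OF p True] 2 by simp
    next
      case False
      then have "-s > 0" using 2 by simp
      moreover have "\<bar>-y\<bar> \<le> (-s)/2" using 2 False by auto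
      ultimately have H: "\<bar>-s+-y\<bar> powr p \<le> \<bar>-s\<bar> powr p + p * phi p (-s) * (-y) + Lc a * (ww p (-s) * (-y)^2 + \<bar>-y\<bar> powr p)"
        by (rule pw_pos[OF p])
      have e1: "\<bar>-s+-y\<bar> powr p = \<bar>s+y\<bar> powr p" proof - have "-s + -y = -(s+y)" by simp then show ?thesis by (simp only: abs_minus_cancel) qed
      have e2: "\<bar>-s\<bar> powr p = \<bar>s\<bar> powr p" by simp
      have e3: "p * phi p (-s) * (-y) = p * phi p s * y" by (simp add: phi_def)
      have e4: "ww p (-s) * (-y)^2 + \<bar>-y\<bar> powr p = ww p s * y^2 + \<bar>y\<bar> powr p" by (simp add: ww_def)
      show ?thesis using H[unfolded e1 e2 e3 e4] .
    qed
  next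
    case 3
    have ypos: "\<bar>y\<bar> > 0" using 3 by simp
    have "\<bar>s+y\<bar> \<le> 3 * \<bar>y\<bar>" using 3 by linarith
    then have "\<bar>s+y\<bar> powr p \<le> (3 * \<bar>y\<bar>) powr p" using p by (intro powr_mono2) auto
    also have "\<dots> = 3 powr p * \<bar>y\<bar> powr p" by (simp add: powr_mult)
    finally have lhs: "\<bar>s+y\<bar> powr p \<le> 3 powr p * \<bar>y\<bar> powr p" .
    have "\<bar>phi p s * y\<bar> = \<bar>s\<bar> powr (p-1) * \<bar>y\<bar>"
      using 3 by (simp add: phi_def abs_mult powr_diff)
    also have "\<dots> \<le> (2*\<bar>y\<bar>) powr (p-1) * \<bar>y\<bar>"
      using 3 p by (intro mult_right_mono powr_mono2) auto
    also have "\<dots> = 2 powr (p-1) * \<bar>y\<bar> powr p"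
      using ypos by (simp add: powr_mult powr_diff)
    also have "\<dots> \<le> 2 powr p * \<bar>y\<bar> powr p"
      by (intro mult_right_mono powr_mono) auto
    finally have ph: "\<bar>phi p s * y\<bar> \<le> 2 powr p * \<bar>y\<bar> powr p" .
    have "- (p * (2 powr p * \<bar>y\<bar> powr p)) \<le> p * (phi p s * y)"
    proof -
      have "- (2 powr p * \<bar>y\<bar> powr p) \<le> phi p s * y" using ph by (simp add: abs_le_iff)
      then have "p * (- (2 powr p * \<bar>y\<bar> powr p)) \<le> p * (phi p s * y)" using p by (intro mult_left_mono) auto
      then show ?thesis by simp
    qed
    moreover have "3 powr p * \<bar>y\<bar> powr p + p * (2 powr p * \<bar>y\<bar> powr p) \<le> Lc a * \<bar>y\<bar> powr p"
    proof -
      have "(3 powr p + p * 2 powr p) * \<bar>y\<bar> powr p \<le> Lc a * \<bar>y\<bar> powr p"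
        using L by (intro mult_right_mono) auto
      then show ?thesis by (simp add: algebra_simps)
    qed
    moreover have "Lc a * \<bar>y\<bar> powr p \<le> Lc a * (ww p s * y^2 + \<bar>y\<bar> powr p)"
      using L w by (intro mult_left_mono) auto
    moreover have "0 \<le> \<bar>s\<bar> powr p" by simp
    ultimately show ?thesis using lhs unfolding mult.assoc[of p] by linarith
  qed
qed



lemma powr_le_self: "0 \<le> (x::real) \<Longrightarrow> x \<le> 1 \<Longrightarrow> 1 \<le> q \<Longrightarrow> x powr q \<le> x"
  by (cases "x = 0") (auto intro: powr_le_one_le)

lemma powr_superadd:
  fixes B c q :: real
  assumes "0 \<le> B" "0 \<le> c" "1 \<le> q"
  shows "B powr q + c powr q \<le> (B + c) powr q"
proof (cases "B + c = 0")
  case True then have "B = 0" "c = 0" using assms by auto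
  then show ?thesis using assms by simp
next
  case False
  define s where "s = B + c"
  have s: "s > 0" using False assms by (simp add: s_def)
  have "B powr q = s powr q * (B/s) powr q" using s assms by (simp add: powr_divide)
  also have "\<dots> \<le> s powr q * (B/s)" using s assms
    by (intro mult_left_mono powr_le_self) (auto simp: s_def)
  finally have 1: "B powr q \<le> s powr q * (B/s)" .
  have "c powr q = s powr q * (c/s) powr q" using s assms by (simp add: powr_divide)
  also have "\<dots> \<le> s powr q * (c/s)" using s assms
    by (intro mult_left_mono powr_le_self) (auto simp: s_def)
  finally have 2: "c powr q \<le> s powr q * (c/s)" .
  have "s powr q * (B/s) + s powr q * (c/s) = s powr q * ((B + c)/s)"
    by (simp add: add_divide_distrib ring_distribs)
  also have "(B + c)/s = 1" using s by (simp add: s_def)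
  finally have "s powr q * (B/s) + s powr q * (c/s) = s powr q" by simp
  with 1 2 show ?thesis by (simp add: s_def)
qed

lemma bern_real:
  fixes x q :: real
  assumes "0 \<le> x" "1 \<le> q"
  shows "1 + q * x \<le> (1 + x) powr q"
proof -
  have a: "0 < (1+x) powr q" using assms by simp
  have "((1+x) powr q) powr (1/q) * 1 powr (1 - 1/q) \<le> (1/q) * (1+x) powr q + (1 - 1/q) * 1"
    using assms a by (intro Youngs_inequality_0) auto
  moreover have "((1+x) powr q) powr (1/q) = 1 + x" using assms by (simp add: powr_powr)
  ultimately have "1 + x \<le> (1/q) * (1+x) powr q + (1 - 1/q)" by simp
  then have "q * (1 + x) \<le> q * ((1/q) * (1+x) powr q + (1 - 1/q))"
    using assms by (intro mult_left_mono) auto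
  moreover have "q * ((1/q) * (1+x) powr q + (1 - 1/q)) = (1+x) powr q + q - 1"
    using assms by (simp add: field_simps)
  ultimately show ?thesis by (simp add: algebra_simps)
qed

lemma powr_bern:
  fixes B c q :: real
  assumes "0 \<le> B" "0 \<le> c" "1 \<le> q"
  shows "B powr q + B powr (q - 1) * c \<le> (B + c) powr q"
proof (cases "B = 0")
  case True then show ?thesis using assms by simp
next
  case False
  then have B: "B > 0" using assms by simp
  have "B powr q + B powr (q - 1) * c \<le> B powr q + q * (B powr (q - 1) * c)"
    using assms B mult_right_mono[of 1 q "B powr (q - 1) * c"] by simp
  also have "\<dots> = B powr q * (1 + q * (c/B))"
    using B by (simp add: powr_diff field_simps)
  also have "\<dots> \<le> B powr q * (1 + c/B) powr q"
    using assms B by (intro mult_left_mono bern_real) auto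
  also have "\<dots> = (B * (1 + c/B)) powr q"
    using B assms by (simp add: powr_mult)
  also have "B * (1 + c/B) = B + c" using B by (simp add: field_simps)
  finally show ?thesis .
qed

lemma rec_step:
  fixes K L q m B c :: real
  assumes q: "1 \<le> q" and L: "1 \<le> L" and K1: "2 * L \<le> K powr (1/q)" and K2: "2 * L \<le> K"
    and m: "0 \<le> m" "m \<le> K * B powr q" and B: "0 \<le> B" and c: "0 \<le> c"
  shows "m + L * (m powr (1 - 1/q) * c + c powr q) \<le> K * (B + c) powr q"
proof -
  have Kp: "K > 0" using K2 L by simp
  have e: "0 \<le> 1 - 1/q" using q by (simp add: field_simps)
  have "m powr (1 - 1/q) \<le> (K * B powr q) powr (1 - 1/q)"
    using m e by (intro powr_mono2) auto
  also have "\<dots> = K powr (1 - 1/q) * B powr (q - 1)"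
    using Kp B q by (simp add: powr_mult powr_powr algebra_simps)
  finally have m1: "m powr (1 - 1/q) \<le> K powr (1 - 1/q) * B powr (q - 1)" .
  have "L * K powr (1 - 1/q) = L * K / K powr (1/q)" using Kp by (simp add: powr_diff)
  also have "\<dots> \<le> K / 2"
  proof -
    have kp: "K powr (1/q) > 0" using Kp by simp
    have "L * K * 2 \<le> K * K powr (1/q)" using K1 Kp by (simp add: mult.commute mult_left_mono)
    then show ?thesis using kp by (simp add: field_simps)
  qed
  finally have LK: "L * K powr (1 - 1/q) \<le> K / 2" .
  have "L * (m powr (1 - 1/q) * c) \<le> L * (K powr (1 - 1/q) * B powr (q - 1) * c)"
    using m1 L c by (intro mult_left_mono mult_right_mono) auto
  also have "\<dots> = (L * K powr (1 - 1/q)) * (B powr (q - 1) * c)" by simp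
  also have "\<dots> \<le> K / 2 * (B powr (q - 1) * c)"
    using LK c by (intro mult_right_mono) auto
  finally have t1: "L * (m powr (1 - 1/q) * c) \<le> K / 2 * (B powr (q - 1) * c)" .
  have t2: "L * c powr q \<le> K / 2 * c powr q" using K2 by (intro mult_right_mono) auto
  have s1: "B powr q + c powr q \<le> (B + c) powr q" using powr_superadd B c q by blast
  have s2: "B powr q + B powr (q - 1) * c \<le> (B + c) powr q" using powr_bern B c q by blast
  have "m + L * (m powr (1 - 1/q) * c + c powr q)
      \<le> K * B powr q + K / 2 * (B powr (q - 1) * c) + K / 2 * c powr q"
    using m t1 t2 by (simp add: distrib_left)
  also have "\<dots> = K * (B powr q + (B powr (q - 1) * c + c powr q) / 2)" by (simp add: field_simps)
  also have "\<dots> \<le> K * (B + c) powr q"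
  proof -
    have "B powr q + (B powr (q - 1) * c + c powr q) / 2 \<le> (B + c) powr q" using add_mono[OF s1 s2] by (simp add: field_simps)
    then show ?thesis using Kp by (intro mult_left_mono) auto
  qed
  finally show ?thesis .
qed



lemma ww_nz: "s \<noteq> 0 \<Longrightarrow> ww p s = \<bar>s\<bar> powr (p - 2)"
  by (simp add: ww_def powr_diff powr_numeral)

lemma ww_0[simp]: "ww p 0 = 0" and phi_0[simp]: "phi p 0 = 0"
  by (simp_all add: ww_def phi_def)

lemma ww_nonneg: "0 \<le> ww p s" by (simp add: ww_def)

lemma ww_bound:
  assumes p: "2 \<le> p"
  shows "ww p s * y^2 \<le> \<bar>s\<bar> powr p + \<bar>y\<bar> powr p"
proof (cases "s = 0")
  case True then show ?thesis by simp
next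
  case False
  show ?thesis
  proof (cases "\<bar>s\<bar> \<le> \<bar>y\<bar>")
    case True
    then have y: "y \<noteq> 0" using False by auto
    have "ww p s * y^2 = \<bar>s\<bar> powr (p-2) * y^2" using False by (simp add: ww_nz)
    also have "\<dots> \<le> \<bar>y\<bar> powr (p-2) * y^2" using True p by (intro mult_right_mono powr_mono2) auto
    also have "\<dots> = \<bar>y\<bar> powr p" using y by (simp add: powr_diff powr_numeral)
    finally show ?thesis using powr_ge_zero[of "\<bar>s\<bar>" p] by linarith
  next
    case f2: False
    have "ww p s * y^2 \<le> ww p s * s^2" using f2 ww_nonneg[of p s]
      by (intro mult_left_mono) (auto simp: abs_le_square_iff)
    also have "\<dots> = \<bar>s\<bar> powr p" using False by (simp add: ww_def)
    finally show ?thesis using powr_ge_zero[of "\<bar>y\<bar>" p] by linarith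
  qed
qed

lemma phi_bound:
  assumes p: "2 \<le> p"
  shows "\<bar>phi p s * y\<bar> \<le> \<bar>s\<bar> powr p + \<bar>y\<bar> powr p"
proof (cases "s = 0")
  case True then show ?thesis by simp
next
  case False
  have e: "\<bar>phi p s * y\<bar> = \<bar>s\<bar> powr (p-1) * \<bar>y\<bar>" using False by (simp add: phi_def abs_mult powr_diff)
  show ?thesis
  proof (cases "\<bar>s\<bar> \<le> \<bar>y\<bar>")
    case True
    then have y: "y \<noteq> 0" using False by auto
    have "\<bar>s\<bar> powr (p-1) * \<bar>y\<bar> \<le> \<bar>y\<bar> powr (p-1) * \<bar>y\<bar>" using True p by (intro mult_right_mono powr_mono2) auto
    also have "\<dots> = \<bar>y\<bar> powr p" using y by (simp add: powr_diff)
    finally show ?thesis using e powr_ge_zero[of "\<bar>s\<bar>" p] by linarith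
  next
    case f2: False
    have "\<bar>s\<bar> powr (p-1) * \<bar>y\<bar> \<le> \<bar>s\<bar> powr (p-1) * \<bar>s\<bar>" using f2 by (intro mult_left_mono) auto
    also have "\<dots> = \<bar>s\<bar> powr p" using False by (simp add: powr_diff)
    finally show ?thesis using e powr_ge_zero[of "\<bar>y\<bar>" p] by linarith
  qed
qed

lemma sum_powr_bound:
  fixes s y p :: real
  assumes p: "0 \<le> p"
  shows "\<bar>s + y\<bar> powr p \<le> 2 powr p * (\<bar>s\<bar> powr p + \<bar>y\<bar> powr p)"
proof -
  have "\<bar>s + y\<bar> \<le> 2 * max \<bar>s\<bar> \<bar>y\<bar>" by linarith
  then have "\<bar>s + y\<bar> powr p \<le> (2 * max \<bar>s\<bar> \<bar>y\<bar>) powr p" using p by (intro powr_mono2) auto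
  also have "\<dots> = 2 powr p * max \<bar>s\<bar> \<bar>y\<bar> powr p" by (simp add: powr_mult)
  also have "\<dots> \<le> 2 powr p * (\<bar>s\<bar> powr p + \<bar>y\<bar> powr p)"
    by (intro mult_left_mono) (auto simp: max_def)
  finally show ?thesis .
qed

lemma young0:
  fixes x z t :: real
  assumes "0 \<le> t" "t \<le> 1" "0 \<le> x" "0 \<le> z"
  shows "x powr t * z powr (1 - t) \<le> t * x + (1 - t) * z"
proof (cases "x = 0 \<or> z = 0")
  case True then show ?thesis using assms by auto
next
  case False then show ?thesis using assms by (intro Youngs_inequality_0) auto
qed

lemma ww_young:
  fixes p m b s y :: real
  assumes p: "2 \<le> p" and m: "0 < m" and b: "0 < b"
  shows "ww p s * y^2 \<le> m powr (1 - 2/p) * b powr (2/p) * ((1 - 2/p) * (\<bar>s\<bar> powr p / m) + (2/p) * (\<bar>y\<bar> powr p / b))"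
proof (cases "s = 0 \<or> y = 0")
  case True
  have "0 \<le> (1 - 2/p) * (\<bar>s\<bar> powr p / m) + (2/p) * (\<bar>y\<bar> powr p / b)"
    using p m b by (intro add_nonneg_nonneg mult_nonneg_nonneg) (auto simp: field_simps)
  then have "0 \<le> m powr (1 - 2/p) * b powr (2/p) * ((1 - 2/p) * (\<bar>s\<bar> powr p / m) + (2/p) * (\<bar>y\<bar> powr p / b))"
    by (intro mult_nonneg_nonneg) auto
  then show ?thesis using True by auto
next
  case False
  have t: "0 \<le> 1 - 2/p" "1 - 2/p \<le> 1" using p by (auto simp: field_simps)
  have e1: "(\<bar>s\<bar> powr p / m) powr (1 - 2/p) = \<bar>s\<bar> powr (p - 2) / m powr (1 - 2/p)"
    using m p by (simp add: powr_divide powr_powr algebra_simps)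
  have e2: "(\<bar>y\<bar> powr p / b) powr (1 - (1 - 2/p)) = y^2 / b powr (2/p)"
    using b p False by (simp add: powr_divide powr_powr powr_numeral)
  have "ww p s * y^2 = m powr (1 - 2/p) * b powr (2/p) * ((\<bar>s\<bar> powr p / m) powr (1 - 2/p) * (\<bar>y\<bar> powr p / b) powr (1 - (1 - 2/p)))"
    unfolding e1 e2 using False m b by (simp add: ww_nz)
  also have "\<dots> \<le> m powr (1 - 2/p) * b powr (2/p) * ((1 - 2/p) * (\<bar>s\<bar> powr p / m) + (1 - (1 - 2/p)) * (\<bar>y\<bar> powr p / b))"
    using t m b by (intro mult_left_mono young0) auto
  finally show ?thesis by simp
qed



lemma (in prob_space) holder_ww:
  fixes S D :: "'a \<Rightarrow> real"
  assumes p: "2 \<le> p" and SM: "S \<in> borel_measurable M" and DM: "D \<in> borel_measurable M"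
    and Si: "integrable M (\<lambda>\<omega>. \<bar>S \<omega>\<bar> powr p)" and Di: "integrable M (\<lambda>\<omega>. \<bar>D \<omega>\<bar> powr p)"
  shows "integrable M (\<lambda>\<omega>. ww p (S \<omega>) * (D \<omega>)^2)"
    and "(\<integral>\<omega>. ww p (S \<omega>) * (D \<omega>)^2 \<partial>M)
          \<le> (\<integral>\<omega>. \<bar>S \<omega>\<bar> powr p \<partial>M) powr (1 - 2/p) * (\<integral>\<omega>. \<bar>D \<omega>\<bar> powr p \<partial>M) powr (2/p)"
proof -
  have meas: "(\<lambda>\<omega>. ww p (S \<omega>) * (D \<omega>)^2) \<in> borel_measurable M"
    unfolding ww_def using SM DM by measurable
  show int: "integrable M (\<lambda>\<omega>. ww p (S \<omega>) * (D \<omega>)^2)"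
  proof (rule Bochner_Integration.integrable_bound[OF Bochner_Integration.integrable_add[OF Si Di] meas])
    show "AE \<omega> in M. norm (ww p (S \<omega>) * (D \<omega>)^2) \<le> norm (\<bar>S \<omega>\<bar> powr p + \<bar>D \<omega>\<bar> powr p)"
      using ww_bound[OF p] ww_nonneg by (auto intro!: AE_I2)
  qed
  define m where "m = (\<integral>\<omega>. \<bar>S \<omega>\<bar> powr p \<partial>M)"
  define b where "b = (\<integral>\<omega>. \<bar>D \<omega>\<bar> powr p \<partial>M)"
  have m0: "0 \<le> m" unfolding m_def by (intro integral_nonneg_AE) auto
  have b0: "0 \<le> b" unfolding b_def by (intro integral_nonneg_AE) auto
  have rhs0: "0 \<le> m powr (1 - 2/p) * b powr (2/p)" by simp
  consider "m = 0" | "b = 0" | "m > 0" "b > 0" using m0 b0 by linarith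
  then show "(\<integral>\<omega>. ww p (S \<omega>) * (D \<omega>)^2 \<partial>M) \<le> m powr (1 - 2/p) * b powr (2/p)"
    unfolding m_def[symmetric] b_def[symmetric]
  proof cases
    case 1
    then have "AE \<omega> in M. \<bar>S \<omega>\<bar> powr p = 0"
      using integral_nonneg_eq_0_iff_AE[OF Si] m_def by auto
    then have "AE \<omega> in M. ww p (S \<omega>) * (D \<omega>)^2 = 0" by eventually_elim simp
    then have "(\<integral>\<omega>. ww p (S \<omega>) * (D \<omega>)^2 \<partial>M) = 0" by (simp add: integral_eq_zero_AE)
    then show ?thesis using rhs0 by simp
  next
    case 2
    then have "AE \<omega> in M. \<bar>D \<omega>\<bar> powr p = 0"
      using integral_nonneg_eq_0_iff_AE[OF Di] b_def by auto
    then have "AE \<omega> in M. ww p (S \<omega>) * (D \<omega>)^2 = 0" by eventually_elim simp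
    then have "(\<integral>\<omega>. ww p (S \<omega>) * (D \<omega>)^2 \<partial>M) = 0" by (simp add: integral_eq_zero_AE)
    then show ?thesis using rhs0 by simp
  next
    case 3
    define C where "C = m powr (1 - 2/p) * b powr (2/p)"
    have "(\<integral>\<omega>. ww p (S \<omega>) * (D \<omega>)^2 \<partial>M)
        \<le> (\<integral>\<omega>. C * ((1 - 2/p) * (\<bar>S \<omega>\<bar> powr p / m) + (2/p) * (\<bar>D \<omega>\<bar> powr p / b)) \<partial>M)"
      using int Si Di 3 ww_young[OF p, of m b] unfolding C_def
      by (intro integral_mono) auto
    also have "\<dots> = C * ((1 - 2/p) * (m / m) + (2/p) * (b / b))"
      using Si Di by (simp add: m_def b_def)
    also have "\<dots> = C" using 3 by simp
    finally show ?thesis unfolding C_def .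
  qed
qed



definition Km :: "real \<Rightarrow> real" where "Km a = (2 * Lc a) powr a"

lemma Km_props:
  assumes p: "2 \<le> p" "p \<le> a"
  shows "2 * Lc a \<le> Km a powr (1/(p/2))" "2 * Lc a \<le> Km a" "1 \<le> Km a"
proof -
  have L: "1 \<le> Lc a" using Lc_ge[OF p] by simp
  have "Km a powr (1/(p/2)) = (2 * Lc a) powr (a * (2/p))" using L by (simp add: Km_def powr_powr)
  also have "\<dots> \<ge> (2 * Lc a) powr 1" using L p by (intro powr_mono) (auto simp: field_simps)
  finally show "2 * Lc a \<le> Km a powr (1/(p/2))" using L by simp
  have "(2 * Lc a) powr 1 \<le> Km a" unfolding Km_def using L p by (intro powr_mono) auto
  then show "2 * Lc a \<le> Km a" using L by simp
  then show "1 \<le> Km a" using L by simp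
qed

lemma (in prob_space) mart_bound:
  fixes S D :: "nat \<Rightarrow> 'a \<Rightarrow> real"
  assumes p: "2 \<le> p" "p \<le> a"
    and S0: "\<And>\<omega>. S 0 \<omega> = 0"
    and Ss: "\<And>k \<omega>. S (Suc k) \<omega> = S k \<omega> + D k \<omega>"
    and DM: "\<And>k. k < n \<Longrightarrow> D k \<in> borel_measurable M"
    and Di: "\<And>k. k < n \<Longrightarrow> integrable M (\<lambda>\<omega>. \<bar>D k \<omega>\<bar> powr p)"
    and orth: "\<And>k. k < n \<Longrightarrow> integrable M (\<lambda>\<omega>. \<bar>S k \<omega>\<bar> powr p) \<Longrightarrow>
                 (\<integral>\<omega>. phi p (S k \<omega>) * D k \<omega> \<partial>M) = 0"
  shows "integrable M (\<lambda>\<omega>. \<bar>S n \<omega>\<bar> powr p) \<and>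
         (\<integral>\<omega>. \<bar>S n \<omega>\<bar> powr p \<partial>M) \<le> Km a * (\<Sum>k<n. (\<integral>\<omega>. \<bar>D k \<omega>\<bar> powr p \<partial>M) powr (2/p)) powr (p/2)"
proof -
  define L where "L = Lc a"
  define K where "K = Km a"
  have L1: "1 \<le> L" using Lc_ge[OF p] by (simp add: L_def)
  have KP: "2 * L \<le> K powr (1/(p/2))" "2 * L \<le> K" using Km_props[OF p] by (auto simp: L_def K_def)
  define \<beta> where "\<beta> k = (\<integral>\<omega>. \<bar>D k \<omega>\<bar> powr p \<partial>M)" for k
  have \<beta>0: "0 \<le> \<beta> k" for k unfolding \<beta>_def by (intro integral_nonneg_AE) auto
  have "k \<le> n \<Longrightarrow> S k \<in> borel_measurable M \<and> integrable M (\<lambda>\<omega>. \<bar>S k \<omega>\<bar> powr p) \<and>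
         (\<integral>\<omega>. \<bar>S k \<omega>\<bar> powr p \<partial>M) \<le> K * (\<Sum>l<k. \<beta> l powr (2/p)) powr (p/2)" for k
  proof (induction k)
    case 0
    have "S 0 = (\<lambda>_. 0)" using S0 by auto
    then show ?case using p by simp
  next
    case (Suc k)
    then have k: "k < n" by simp
    from Suc have IH: "S k \<in> borel_measurable M" "integrable M (\<lambda>\<omega>. \<bar>S k \<omega>\<bar> powr p)"
      "(\<integral>\<omega>. \<bar>S k \<omega>\<bar> powr p \<partial>M) \<le> K * (\<Sum>l<k. \<beta> l powr (2/p)) powr (p/2)" by auto
    have SsE: "S (Suc k) = (\<lambda>\<omega>. S k \<omega> + D k \<omega>)" using Ss by auto
    have meas: "S (Suc k) \<in> borel_measurable M" unfolding SsE using IH DM[OF k] by measurable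
    have int1: "integrable M (\<lambda>\<omega>. \<bar>S (Suc k) \<omega>\<bar> powr p)"
    proof (rule Bochner_Integration.integrable_bound)
      show "integrable M (\<lambda>\<omega>. 2 powr p * (\<bar>S k \<omega>\<bar> powr p + \<bar>D k \<omega>\<bar> powr p))"
        using IH Di[OF k] by auto
      show "(\<lambda>\<omega>. \<bar>S (Suc k) \<omega>\<bar> powr p) \<in> borel_measurable M" using meas by measurable
      show "AE \<omega> in M. norm (\<bar>S (Suc k) \<omega>\<bar> powr p) \<le> norm (2 powr p * (\<bar>S k \<omega>\<bar> powr p + \<bar>D k \<omega>\<bar> powr p))"
        using sum_powr_bound[of p] p by (auto simp: SsE intro!: AE_I2)
    qed
    have intphi: "integrable M (\<lambda>\<omega>. phi p (S k \<omega>) * D k \<omega>)"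
    proof (rule Bochner_Integration.integrable_bound)
      show "integrable M (\<lambda>\<omega>. \<bar>S k \<omega>\<bar> powr p + \<bar>D k \<omega>\<bar> powr p)"
        using IH Di[OF k] by auto
      show "(\<lambda>\<omega>. phi p (S k \<omega>) * D k \<omega>) \<in> borel_measurable M"
        unfolding phi_def using IH DM[OF k] by measurable
      show "AE \<omega> in M. norm (phi p (S k \<omega>) * D k \<omega>) \<le> norm (\<bar>S k \<omega>\<bar> powr p + \<bar>D k \<omega>\<bar> powr p)"
        using phi_bound[OF p(1)] by (auto intro!: AE_I2)
    qed
    have intw: "integrable M (\<lambda>\<omega>. ww p (S k \<omega>) * (D k \<omega>)^2)"
      and hold: "(\<integral>\<omega>. ww p (S k \<omega>) * (D k \<omega>)^2 \<partial>M)
          \<le> (\<integral>\<omega>. \<bar>S k \<omega>\<bar> powr p \<partial>M) powr (1 - 2/p) * \<beta> k powr (2/p)"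
      using holder_ww[OF p(1) IH(1) DM[OF k] IH(2) Di[OF k]] by (auto simp: \<beta>_def)
    define m where "m = (\<integral>\<omega>. \<bar>S k \<omega>\<bar> powr p \<partial>M)"
    have m0: "0 \<le> m" unfolding m_def by (intro integral_nonneg_AE) auto
    have "(\<integral>\<omega>. \<bar>S (Suc k) \<omega>\<bar> powr p \<partial>M)
        \<le> (\<integral>\<omega>. \<bar>S k \<omega>\<bar> powr p + p * (phi p (S k \<omega>) * D k \<omega>)
              + L * (ww p (S k \<omega>) * (D k \<omega>)^2 + \<bar>D k \<omega>\<bar> powr p) \<partial>M)"
      using int1 intphi intw IH(2) Di[OF k] pw_ineq[OF p] unfolding L_def SsE
      by (intro integral_mono) (auto simp: mult.assoc)
    also have "\<dots> = m + p * (\<integral>\<omega>. phi p (S k \<omega>) * D k \<omega> \<partial>M)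
        + L * ((\<integral>\<omega>. ww p (S k \<omega>) * (D k \<omega>)^2 \<partial>M) + \<beta> k)"
      using intphi intw IH(2) Di[OF k] by (simp add: m_def \<beta>_def)
    also have "\<dots> = m + L * ((\<integral>\<omega>. ww p (S k \<omega>) * (D k \<omega>)^2 \<partial>M) + \<beta> k)"
      using orth[OF k IH(2)] by simp
    also have "\<dots> \<le> m + L * (m powr (1 - 2/p) * \<beta> k powr (2/p) + \<beta> k)"
      using hold L1 unfolding m_def by (intro add_left_mono mult_left_mono add_right_mono) auto
    also have "\<dots> = m + L * (m powr (1 - 1/(p/2)) * \<beta> k powr (2/p) + (\<beta> k powr (2/p)) powr (p/2))"
      using \<beta>0[of k] p by (simp add: powr_powr)
    also have "\<dots> \<le> K * ((\<Sum>l<k. \<beta> l powr (2/p)) + \<beta> k powr (2/p)) powr (p/2)"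
      by (rule rec_step) (use p L1 KP m0 IH(3) in \<open>auto simp: m_def intro!: sum_nonneg\<close>)
    finally show ?case using meas int1 by (simp add: add.commute)
  qed
  from this[of n] show ?thesis by (simp add: K_def \<beta>_def)
qed



definition ins :: "nat \<Rightarrow> nat \<Rightarrow> nat list \<Rightarrow> nat list" where
  "ins j k ks = take j ks @ k # drop j ks"

definition cf :: "(nat list \<Rightarrow> real) \<Rightarrow> nat \<Rightarrow> nat list \<Rightarrow> real" where
  "cf A k ks = (\<Sum>j\<le>length ks. A (ins j k ks))"

definition gch :: "nat \<Rightarrow> nat \<Rightarrow> (nat list \<Rightarrow> real) \<Rightarrow> (nat \<Rightarrow> real) \<Rightarrow> real" where
  "gch n d A x = (\<Sum>ks\<in>tensor_indices n d. A ks * prod_list (map x ks))"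

definition Sig :: "nat \<Rightarrow> nat \<Rightarrow> (nat \<times> nat list \<times> nat) set" where
  "Sig n e = (SIGMA k:{..<n}. SIGMA ks:tensor_indices k e. {..e})"

definition FF :: "nat \<times> nat list \<times> nat \<Rightarrow> nat list" where
  "FF t = (case t of (k, ks, j) \<Rightarrow> ins j k ks)"

lemma finite_T[simp]: "finite (tensor_indices n d)"
proof -
  have "tensor_indices n d = {xs. set xs \<subseteq> {..<n} \<and> length xs = d}"
    by (auto simp: tensor_indices_def)
  then show ?thesis using finite_lists_length_eq[of "{..<n}" d] by simp
qed

lemma prod_nth_list: "(\<Prod>j<length l. f (l ! j)) = prod_list (map f l)"
proof (induction l)
  case Nil then show ?case by simp
next
  case (Cons a l)
  have "(\<Prod>j<length (a # l). f ((a # l) ! j)) = f a * (\<Prod>j<length l. f (l ! j))"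
    by (subst length_Cons, subst prod.lessThan_Suc_shift) simp
  then show ?case using Cons by simp
qed

lemma chaos_gch: "chaos n d A X \<omega> = gch n d A (\<lambda>i. X i \<omega>)"
  unfolding chaos_def gch_def
  by (intro sum.cong refl) (simp add: tensor_indices_def prod_nth_list[symmetric])

lemma prod_ins: fixes x :: "nat \<Rightarrow> real" shows "prod_list (map x (ins j k ks)) = x k * prod_list (map x ks)"
proof -
  have e: "prod_list (map x ks) = prod_list (map x (take j ks)) * prod_list (map x (drop j ks))"
    by (metis append_take_drop_id map_append prod_list.append)
  show ?thesis unfolding ins_def e by (simp add: mult.left_commute)
qed

lemma set_ins: "set (ins j k ks) = insert k (set ks)"
proof -
  have "set ks = set (take j ks @ drop j ks)" by simp
  then show ?thesis unfolding ins_def by (simp only: set_append list.set) auto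
qed

lemma length_ins: "j \<le> length ks \<Longrightarrow> length (ins j k ks) = Suc (length ks)"
  by (simp add: ins_def)

lemma distinct_ins: "distinct (ins j k ks) \<Longrightarrow> distinct ks"
proof -
  assume a: "distinct (ins j k ks)"
  have "distinct (take j ks @ drop j ks)" using a unfolding ins_def by (simp del: append_take_drop_id)
  then show ?thesis by (metis append_take_drop_id)
qed

lemma FF_in: "t \<in> Sig n e \<Longrightarrow> FF t \<in> tensor_indices n (Suc e)"
  by (auto simp: Sig_def FF_def tensor_indices_def set_ins length_ins)

lemma FF_inj: "inj_on FF (Sig n e)"
proof (rule inj_on_inverseI)
  define G where "G L = (let k = Max (set L) in (k, remove1 k L, length (takeWhile (\<lambda>x. x \<noteq> k) L)))" for L :: "nat list"
  fix t assume t: "t \<in> Sig n e"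
  then obtain k ks j where tt: "t = (k, ks, j)" and k: "k < n" and ks: "ks \<in> tensor_indices k e" and j: "j \<le> e"
    by (auto simp: Sig_def)
  have lt: "\<forall>x\<in>set ks. x < k" using ks by (auto simp: tensor_indices_def)
  have M: "Max (set (ins j k ks)) = k" using lt by (auto simp: set_ins intro!: Max_eqI)
  have nk: "k \<notin> set (take j ks)" "k \<notin> set (drop j ks)" using lt by (auto dest: in_set_takeD in_set_dropD)
  have r: "remove1 k (ins j k ks) = ks"
    using nk unfolding ins_def by (simp add: remove1_append)
  have tw: "takeWhile (\<lambda>x. x \<noteq> k) (ins j k ks) = take j ks"
    using nk unfolding ins_def by (subst takeWhile_append2) auto
  have lj: "length (take j ks) = j" using ks j by (simp add: tensor_indices_def)
  show "G (FF t) = t" unfolding G_def FF_def tt using M r tw lj by (simp add: Let_def)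
qed

lemma distinct_in_image:
  assumes js: "js \<in> tensor_indices n (Suc e)" and d: "distinct js"
  shows "js \<in> FF ` Sig n e"
proof -
  have ne: "js \<noteq> []" using js by (auto simp: tensor_indices_def)
  define k where "k = Max (set js)"
  have kin: "k \<in> set js" using ne by (simp add: k_def)
  obtain ys zs where sp: "js = ys @ k # zs" using split_list[OF kin] by blast
  have dd: "k \<notin> set ys" "k \<notin> set zs" using d sp by auto
  have le: "\<forall>x\<in>set js. x \<le> k" by (simp add: k_def)
  have "\<forall>x\<in>set (ys @ zs). x < k"
  proof
    fix x assume x: "x \<in> set (ys @ zs)"
    then have "x \<in> set js" "x \<noteq> k" using sp dd by auto
    then show "x < k" using le by force
  qed
  moreover have "set (ys @ zs) \<subseteq> set js" using sp by auto
  ultimately have isT: "ys @ zs \<in> tensor_indices k e"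
    using js sp by (auto simp: tensor_indices_def)
  have kn: "k < n" using kin js by (auto simp: tensor_indices_def)
  have lys: "length ys \<le> e" using js sp by (simp add: tensor_indices_def)
  have "FF (k, ys @ zs, length ys) = js" by (simp add: FF_def ins_def sp)
  moreover have "(k, ys @ zs, length ys) \<in> Sig n e" using isT kn lys by (simp add: Sig_def)
  ultimately show ?thesis by force
qed

lemma finite_Sig[simp]: "finite (Sig n e)"
  unfolding Sig_def by (intro finite_SigmaI) auto

lemma sum_Sig: "(\<Sum>k<n. \<Sum>ks\<in>tensor_indices k e. \<Sum>j\<le>e. f k ks j) = (\<Sum>(k,ks,j)\<in>Sig n e. f k ks j)"
  unfolding Sig_def by (simp add: sum.Sigma split_def)

lemma sum_over_image:
  assumes "\<And>js. js \<in> tensor_indices n (Suc e) \<Longrightarrow> \<not> distinct js \<Longrightarrow> g js = 0"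
  shows "(\<Sum>t\<in>Sig n e. g (FF t)) = (\<Sum>js\<in>tensor_indices n (Suc e). g js)"
proof -
  have "(\<Sum>t\<in>Sig n e. g (FF t)) = (\<Sum>js\<in>FF ` Sig n e. g js)"
    using sum.reindex[OF FF_inj, of g] by simp
  also have "\<dots> = (\<Sum>js\<in>tensor_indices n (Suc e). g js)"
  proof (rule sum.mono_neutral_left)
    show "FF ` Sig n e \<subseteq> tensor_indices n (Suc e)" using FF_in by auto
    show "\<forall>i\<in>tensor_indices n (Suc e) - FF ` Sig n e. g i = 0"
      using assms distinct_in_image by blast
  qed auto
  finally show ?thesis .
qed

lemma gch_decomp:
  assumes A: "gen_diag_zero n (Suc e) A"
  shows "gch n (Suc e) A x = (\<Sum>k<n. x k * gch k e (cf A k) x)"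
proof -
  have "(\<Sum>k<n. x k * gch k e (cf A k) x)
      = (\<Sum>k<n. \<Sum>ks\<in>tensor_indices k e. \<Sum>j\<le>e. A (ins j k ks) * prod_list (map x (ins j k ks)))"
    unfolding gch_def cf_def
    by (intro sum.cong refl) (auto simp: sum_distrib_left sum_distrib_right prod_ins tensor_indices_def mult_ac intro!: sum.cong)
  also have "\<dots> = (\<Sum>t\<in>Sig n e. (\<lambda>js. A js * prod_list (map x js)) (FF t))"
    unfolding sum_Sig by (intro sum.cong refl) (auto simp: FF_def)
  also have "\<dots> = gch n (Suc e) A x"
    unfolding gch_def using A by (intro sum_over_image) (auto simp: gen_diag_zero_def)
  finally show ?thesis by simp
qed

lemma cf_diag:
  assumes A: "gen_diag_zero n (Suc e) A" and k: "k < n"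
  shows "gen_diag_zero k e (cf A k)"
  unfolding gen_diag_zero_def
proof (intro ballI impI)
  fix ks assume ks: "ks \<in> tensor_indices k e" and nd: "\<not> distinct ks"
  have "A (ins j k ks) = 0" if "j \<le> length ks" for j
  proof -
    have "(k, ks, j) \<in> Sig n e" using ks k that by (auto simp: Sig_def tensor_indices_def)
    then have "ins j k ks \<in> tensor_indices n (Suc e)" using FF_in by (force simp: FF_def)
    moreover have "\<not> distinct (ins j k ks)" using nd distinct_ins by blast
    ultimately show ?thesis using A by (auto simp: gen_diag_zero_def)
  qed
  then show "cf A k ks = 0" by (simp add: cf_def)
qed

lemma hs_sq: "(hs_norm n d A)^2 = (\<Sum>ks\<in>tensor_indices n d. (A ks)^2)"
  unfolding hs_norm_def by (simp add: sum_nonneg)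

lemma cf_hs:
  assumes A: "gen_diag_zero n (Suc e) A"
  shows "(\<Sum>k<n. (hs_norm k e (cf A k))^2) \<le> real (Suc e) * (hs_norm n (Suc e) A)^2"
proof -
  have cs: "(cf A k ks)^2 \<le> real (Suc e) * (\<Sum>j\<le>e. (A (ins j k ks))^2)" if "ks \<in> tensor_indices k e" for k ks
  proof -
    have l: "length ks = e" using that by (simp add: tensor_indices_def)
    have "(cf A k ks)^2 = (\<Sum>j\<le>e. A (ins j k ks) * 1)^2" by (simp add: cf_def l)
    also have "\<dots> \<le> (\<Sum>j\<le>e. (A (ins j k ks))^2) * (\<Sum>j\<le>e. 1^2)" by (rule Cauchy_Schwarz_ineq_sum)
    finally show ?thesis by (simp add: mult.commute)
  qed
  have "(\<Sum>k<n. (hs_norm k e (cf A k))^2) = (\<Sum>k<n. \<Sum>ks\<in>tensor_indices k e. (cf A k ks)^2)"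
    by (simp add: hs_sq)
  also have "\<dots> \<le> (\<Sum>k<n. \<Sum>ks\<in>tensor_indices k e. real (Suc e) * (\<Sum>j\<le>e. (A (ins j k ks))^2))"
    using cs by (intro sum_mono) auto
  also have "\<dots> = real (Suc e) * (\<Sum>k<n. \<Sum>ks\<in>tensor_indices k e. \<Sum>j\<le>e. (A (ins j k ks))^2)"
    by (simp add: sum_distrib_left)
  also have "(\<Sum>k<n. \<Sum>ks\<in>tensor_indices k e. \<Sum>j\<le>e. (A (ins j k ks))^2)
      = (\<Sum>t\<in>Sig n e. (\<lambda>js. (A js)^2) (FF t))"
    unfolding sum_Sig by (intro sum.cong refl) (auto simp: FF_def)
  also have "\<dots> = (hs_norm n (Suc e) A)^2"
    unfolding hs_sq using A by (intro sum_over_image) (auto simp: gen_diag_zero_def)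
  finally show ?thesis by simp
qed



lemma prod_list_meas:
  fixes f :: "nat \<Rightarrow> 'b \<Rightarrow> real"
  assumes "\<And>i. i \<in> set ks \<Longrightarrow> f i \<in> borel_measurable N"
  shows "(\<lambda>\<omega>. prod_list (map (\<lambda>i. f i \<omega>) ks)) \<in> borel_measurable N"
  using assms
proof (induction ks)
  case Nil then show ?case by simp
next
  case (Cons a ks)
  have "f a \<in> borel_measurable N" using Cons by simp
  moreover have "(\<lambda>\<omega>. prod_list (map (\<lambda>i. f i \<omega>) ks)) \<in> borel_measurable N" using Cons by simp
  ultimately show ?case by simp
qed

lemma gch_meas:
  fixes f :: "nat \<Rightarrow> 'b \<Rightarrow> real"
  assumes "\<And>i. i < l \<Longrightarrow> f i \<in> borel_measurable N"
  shows "(\<lambda>\<omega>. gch l e B (\<lambda>i. f i \<omega>)) \<in> borel_measurable N"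
  unfolding gch_def
proof (rule borel_measurable_sum)
  fix ks assume "ks \<in> tensor_indices l e"
  then have "\<And>i. i \<in> set ks \<Longrightarrow> f i \<in> borel_measurable N" using assms by (auto simp: tensor_indices_def)
  then show "(\<lambda>\<omega>. B ks * prod_list (map (\<lambda>i. f i \<omega>) ks)) \<in> borel_measurable N"
    using prod_list_meas by measurable
qed

lemma gch_restrict:
  assumes "l \<le> j"
  shows "gch l e B (restrict x {..<j}) = gch l e B x"
  unfolding gch_def
proof (intro sum.cong refl)
  fix ks assume "ks \<in> tensor_indices l e"
  then have "\<forall>i\<in>set ks. i < j" using assms by (auto simp: tensor_indices_def)
  then have "map (restrict x {..<j}) ks = map x ks" by (intro map_cong) auto
  then show "B ks * prod_list (map (restrict x {..<j}) ks) = B ks * prod_list (map x ks)" by (simp only:)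
qed

lemma gch_meas_Pi:
  assumes "l \<le> j"
  shows "(\<lambda>x. gch l e B x) \<in> borel_measurable (PiM {..<j} (\<lambda>_. borel))"
proof -
  have "(\<lambda>x. gch l e B (\<lambda>i. x i)) \<in> borel_measurable (PiM {..<j} (\<lambda>_. borel))"
    using assms by (intro gch_meas measurable_component_singleton) auto
  then show ?thesis by simp
qed

lemma (in prob_space) indep_prefix:
  fixes X :: "nat \<Rightarrow> 'a \<Rightarrow> real" and l n :: nat and F :: "(nat \<Rightarrow> real) \<Rightarrow> real" and G :: "real \<Rightarrow> real"
  assumes ind: "indep_vars (\<lambda>_. borel) X {..<n}" and l: "l < n"
    and F: "F \<in> borel_measurable (PiM {..<l} (\<lambda>_. borel))"
    and G: "G \<in> borel_measurable borel"
  shows "indep_var borel (\<lambda>\<omega>. F (restrict (\<lambda>i. X i \<omega>) {..<l})) borel (\<lambda>\<omega>. G (X l \<omega>))"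
proof -
  have "indep_var (PiM {..<l} (\<lambda>_. borel)) (\<lambda>\<omega>. restrict (\<lambda>i. X i \<omega>) {..<l})
                  (PiM {l} (\<lambda>_. borel)) (\<lambda>\<omega>. restrict (\<lambda>i. X i \<omega>) {l})"
  proof -
    have "{..<l} \<inter> {l} = {}" "{..<l} \<subseteq> {..<n}" "{l} \<subseteq> {..<n}" using l by auto
    from indep_var_restrict[OF ind this] show ?thesis .
  qed
  moreover have "(\<lambda>x. G (x l)) \<in> borel_measurable (PiM {l} (\<lambda>_. borel :: real measure))"
    using G by measurable
  ultimately have "indep_var borel (F \<circ> (\<lambda>\<omega>. restrict (\<lambda>i. X i \<omega>) {..<l}))
                  borel ((\<lambda>x. G (x l)) \<circ> (\<lambda>\<omega>. restrict (\<lambda>i. X i \<omega>) {l}))"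
    using F by (intro indep_var_compose) auto
  then show ?thesis by (simp add: comp_def)
qed



definition Dc :: "real \<Rightarrow> real \<Rightarrow> nat \<Rightarrow> real" where
  "Dc a p d = Km a ^ d * fact d powr (p/2)"

lemma T0: "tensor_indices k 0 = {[]}"
  by (auto simp: tensor_indices_def)

lemma hs_nonneg: "0 \<le> hs_norm n d A" by (simp add: hs_norm_def sum_nonneg)

lemma Dc_Suc: "Dc a p (Suc e) = Km a * real (Suc e) powr (p/2) * Dc a p e"
proof -
  have "fact (Suc e) powr (p/2) = real (Suc e) powr (p/2) * (fact e :: real) powr (p/2)"
    by (simp add: powr_mult)
  then show ?thesis by (simp add: Dc_def)
qed

lemma Dc_nonneg: "2 \<le> p \<Longrightarrow> p \<le> a \<Longrightarrow> 0 \<le> Dc a p d"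
  using Km_props[of p a] by (simp add: Dc_def)

lemma (in prob_space) moment_bound:
  fixes X :: "nat \<Rightarrow> 'a \<Rightarrow> real" and n :: nat
  assumes p: "2 \<le> p" "p \<le> a"
   and Xm: "\<And>i. i < n \<Longrightarrow> X i \<in> borel_measurable M"
   and ind: "indep_vars (\<lambda>_. borel) X {..<n}"
   and Xc: "\<And>i. i < n \<Longrightarrow> integrable M (X i)" "\<And>i. i < n \<Longrightarrow> expectation (X i) = 0"
   and Xpi: "\<And>i. i < n \<Longrightarrow> integrable M (\<lambda>\<omega>. \<bar>X i \<omega>\<bar> powr p)"
   and Xpb: "\<And>i. i < n \<Longrightarrow> (\<integral>\<omega>. \<bar>X i \<omega>\<bar> powr p \<partial>M) \<le> \<mu>"
   and mu: "0 \<le> \<mu>"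
  shows "k \<le> n \<Longrightarrow> gen_diag_zero k d A \<Longrightarrow>
     integrable M (\<lambda>\<omega>. \<bar>gch k d A (\<lambda>i. X i \<omega>)\<bar> powr p) \<and>
     (\<integral>\<omega>. \<bar>gch k d A (\<lambda>i. X i \<omega>)\<bar> powr p \<partial>M) \<le> Dc a p d * \<mu>^d * hs_norm k d A powr p"
proof (induction d arbitrary: k A)
  case 0
  have g: "gch k 0 A x = A []" for x by (simp add: gch_def T0)
  have h: "hs_norm k 0 A = \<bar>A []\<bar>" by (simp add: hs_norm_def T0)
  show ?case by (simp add: g h Dc_def prob_space)
next
  case (Suc e)
  have kn: "k \<le> n" and A: "gen_diag_zero k (Suc e) A" using Suc.prems by auto
  define H where "H l \<omega> = gch l e (cf A l) (\<lambda>i. X i \<omega>)" for l \<omega>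
  define D where "D l \<omega> = X l \<omega> * H l \<omega>" for l \<omega>
  define S where "S j \<omega> = (\<Sum>l<j. D l \<omega>)" for j \<omega>
  have decomp: "gch k (Suc e) A (\<lambda>i. X i \<omega>) = S k \<omega>" for \<omega>
    unfolding gch_decomp[OF A] S_def D_def H_def by simp
  have IH: "integrable M (\<lambda>\<omega>. \<bar>H l \<omega>\<bar> powr p) \<and>
      (\<integral>\<omega>. \<bar>H l \<omega>\<bar> powr p \<partial>M) \<le> Dc a p e * \<mu>^e * hs_norm l e (cf A l) powr p" if l: "l < k" for l
    unfolding H_def using Suc.IH[of l "cf A l"] cf_diag[OF A l] l kn by simp
  have Hm: "H l \<in> borel_measurable M" if l: "l < k" for l
  proof -
    have "(\<lambda>\<omega>. gch l e (cf A l) (\<lambda>i. X i \<omega>)) \<in> borel_measurable M"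
      using l kn Xm by (intro gch_meas) auto
    then show ?thesis by (simp add: H_def[abs_def])
  qed
  have Hr: "H l \<omega> = gch l e (cf A l) (restrict (\<lambda>i. X i \<omega>) {..<l})" for l \<omega>
    unfolding H_def by (simp add: gch_restrict)
  have Dm: "D l \<in> borel_measurable M" if l: "l < k" for l
  proof -
    have "l < n" using l kn by simp
    then show ?thesis unfolding D_def[abs_def] using Hm[OF l] Xm by simp
  qed
  have Dmom: "integrable M (\<lambda>\<omega>. \<bar>D l \<omega>\<bar> powr p) \<and>
      (\<integral>\<omega>. \<bar>D l \<omega>\<bar> powr p \<partial>M) = (\<integral>\<omega>. \<bar>H l \<omega>\<bar> powr p \<partial>M) * (\<integral>\<omega>. \<bar>X l \<omega>\<bar> powr p \<partial>M)"
    if l: "l < k" for l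
  proof -
    have ln: "l < n" using l kn by simp
    have F: "(\<lambda>x. \<bar>gch l e (cf A l) x\<bar> powr p) \<in> borel_measurable (PiM {..<l} (\<lambda>_. borel))"
      using gch_meas_Pi[of l l e "cf A l"] by measurable
    have iv: "indep_var borel (\<lambda>\<omega>. \<bar>H l \<omega>\<bar> powr p) borel (\<lambda>\<omega>. \<bar>X l \<omega>\<bar> powr p)"
      unfolding Hr using indep_prefix[OF ind ln F, of "\<lambda>s. \<bar>s\<bar> powr p"] by simp
    have eq: "(\<lambda>\<omega>. \<bar>D l \<omega>\<bar> powr p) = (\<lambda>\<omega>. \<bar>H l \<omega>\<bar> powr p * \<bar>X l \<omega>\<bar> powr p)"
      by (simp add: D_def abs_mult powr_mult mult.commute)
    show ?thesis unfolding eq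
      using indep_var_lebesgue_integral[OF iv IH[OF l, THEN conjunct1] Xpi[OF ln]]
            indep_var_integrable[OF iv IH[OF l, THEN conjunct1] Xpi[OF ln]] by simp
  qed
  have orth: "(\<integral>\<omega>. phi p (S l \<omega>) * D l \<omega> \<partial>M) = 0"
    if l: "l < k" and Si: "integrable M (\<lambda>\<omega>. \<bar>S l \<omega>\<bar> powr p)" for l
  proof -
    have ln: "l < n" using l kn by simp
    define F where "F x = phi p (\<Sum>m<l. x m * gch m e (cf A m) x) * gch l e (cf A l) x" for x
    have Fm: "F \<in> borel_measurable (PiM {..<l} (\<lambda>_. borel))"
    proof -
      have "(\<lambda>x. x m * gch m e (cf A m) x) \<in> borel_measurable (PiM {..<l} (\<lambda>_. borel))" if "m < l" for m
      proof (rule borel_measurable_times)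
        show "(\<lambda>x. x m) \<in> borel_measurable (PiM {..<l} (\<lambda>_. borel))"
          using that by (intro measurable_component_singleton) auto
        show "(\<lambda>x. gch m e (cf A m) x) \<in> borel_measurable (PiM {..<l} (\<lambda>_. borel))"
          using that by (intro gch_meas_Pi) auto
      qed
      then have "(\<lambda>x. \<Sum>m<l. x m * gch m e (cf A m) x) \<in> borel_measurable (PiM {..<l} (\<lambda>_. borel))"
        by (intro borel_measurable_sum) auto
      then show ?thesis unfolding F_def[abs_def] phi_def
        using gch_meas_Pi[of l l e "cf A l"] by measurable
    qed
    have Sr: "S l \<omega> = (\<Sum>m<l. restrict (\<lambda>i. X i \<omega>) {..<l} m * gch m e (cf A m) (restrict (\<lambda>i. X i \<omega>) {..<l}))" for \<omega>
      unfolding S_def D_def H_def by (intro sum.cong refl) (simp add: gch_restrict)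
    have Fr: "F (restrict (\<lambda>i. X i \<omega>) {..<l}) = phi p (S l \<omega>) * H l \<omega>" for \<omega>
      unfolding F_def Sr Hr ..
    have iv: "indep_var borel (\<lambda>\<omega>. phi p (S l \<omega>) * H l \<omega>) borel (X l)"
      using indep_prefix[OF ind ln Fm, of "\<lambda>s. s"] unfolding Fr by simp
    have Sm: "S l \<in> borel_measurable M"
      unfolding S_def[abs_def] using Dm l by (intro borel_measurable_sum) auto
    have int: "integrable M (\<lambda>\<omega>. phi p (S l \<omega>) * H l \<omega>)"
    proof (rule Bochner_Integration.integrable_bound)
      show "integrable M (\<lambda>\<omega>. \<bar>S l \<omega>\<bar> powr p + \<bar>H l \<omega>\<bar> powr p)"
        using Si IH[OF l] by auto
      show "(\<lambda>\<omega>. phi p (S l \<omega>) * H l \<omega>) \<in> borel_measurable M"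
        unfolding phi_def using Sm Hm[OF l] by measurable
      show "AE \<omega> in M. norm (phi p (S l \<omega>) * H l \<omega>) \<le> norm (\<bar>S l \<omega>\<bar> powr p + \<bar>H l \<omega>\<bar> powr p)"
        using phi_bound[OF p(1)] by (auto intro!: AE_I2)
    qed
    have "(\<integral>\<omega>. phi p (S l \<omega>) * D l \<omega> \<partial>M) = (\<integral>\<omega>. (phi p (S l \<omega>) * H l \<omega>) * X l \<omega> \<partial>M)"
      by (simp add: D_def mult_ac)
    also have "\<dots> = (\<integral>\<omega>. phi p (S l \<omega>) * H l \<omega> \<partial>M) * (\<integral>\<omega>. X l \<omega> \<partial>M)"
      by (rule indep_var_lebesgue_integral[OF iv int Xc(1)[OF ln]])
    also have "\<dots> = 0" using Xc(2)[OF ln] by simp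
    finally show ?thesis .
  qed
  have mart: "integrable M (\<lambda>\<omega>. \<bar>S k \<omega>\<bar> powr p) \<and>
         (\<integral>\<omega>. \<bar>S k \<omega>\<bar> powr p \<partial>M) \<le> Km a * (\<Sum>l<k. (\<integral>\<omega>. \<bar>D l \<omega>\<bar> powr p \<partial>M) powr (2/p)) powr (p/2)"
    by (rule mart_bound[OF p]) (use Dm Dmom orth in \<open>auto simp: S_def\<close>)
  define C where "C = Dc a p e * \<mu>^Suc e"
  have C0: "0 \<le> C" unfolding C_def using Dc_nonneg[OF p] mu by simp
  have bl: "(\<integral>\<omega>. \<bar>D l \<omega>\<bar> powr p \<partial>M) powr (2/p) \<le> C powr (2/p) * (hs_norm l e (cf A l))^2"
    if l: "l < k" for l
  proof -
    have ln: "l < n" using l kn by simp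
    have h0: "0 \<le> (\<integral>\<omega>. \<bar>H l \<omega>\<bar> powr p \<partial>M)" by (intro integral_nonneg_AE) auto
    have "(\<integral>\<omega>. \<bar>D l \<omega>\<bar> powr p \<partial>M) \<le> (Dc a p e * \<mu>^e * hs_norm l e (cf A l) powr p) * \<mu>"
    proof -
      have nn: "0 \<le> Dc a p e * \<mu>^e * hs_norm l e (cf A l) powr p"
        using Dc_nonneg[OF p, of e] mu by simp
      show ?thesis unfolding Dmom[OF l, THEN conjunct2]
        by (rule mult_mono[OF IH[OF l, THEN conjunct2] Xpb[OF ln] nn]) (rule integral_nonneg_AE, simp)
    qed
    also have "\<dots> = C * hs_norm l e (cf A l) powr p" by (simp add: C_def mult_ac)
    finally have le: "(\<integral>\<omega>. \<bar>D l \<omega>\<bar> powr p \<partial>M) \<le> C * hs_norm l e (cf A l) powr p" .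
    have "(\<integral>\<omega>. \<bar>D l \<omega>\<bar> powr p \<partial>M) powr (2/p) \<le> (C * hs_norm l e (cf A l) powr p) powr (2/p)"
      using le p by (intro powr_mono2) (auto intro!: integral_nonneg_AE)
    also have "\<dots> = C powr (2/p) * (hs_norm l e (cf A l))^2"
      using C0 hs_nonneg p by (simp add: powr_mult powr_powr powr_numeral)
    finally show ?thesis .
  qed
  have "(\<Sum>l<k. (\<integral>\<omega>. \<bar>D l \<omega>\<bar> powr p \<partial>M) powr (2/p)) \<le> (\<Sum>l<k. C powr (2/p) * (hs_norm l e (cf A l))^2)"
    using bl by (intro sum_mono) auto
  also have "\<dots> = C powr (2/p) * (\<Sum>l<k. (hs_norm l e (cf A l))^2)" by (simp add: sum_distrib_left)
  also have "\<dots> \<le> C powr (2/p) * (real (Suc e) * (hs_norm k (Suc e) A)^2)"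
    using cf_hs[OF A] by (intro mult_left_mono) auto
  finally have sb: "(\<Sum>l<k. (\<integral>\<omega>. \<bar>D l \<omega>\<bar> powr p \<partial>M) powr (2/p)) \<le> C powr (2/p) * (real (Suc e) * (hs_norm k (Suc e) A)^2)" .
  have "(\<Sum>l<k. (\<integral>\<omega>. \<bar>D l \<omega>\<bar> powr p \<partial>M) powr (2/p)) powr (p/2)
      \<le> (C powr (2/p) * (real (Suc e) * (hs_norm k (Suc e) A)^2)) powr (p/2)"
    using sb p by (intro powr_mono2) (auto intro!: sum_nonneg)
  also have "\<dots> = C * real (Suc e) powr (p/2) * hs_norm k (Suc e) A powr p"
  proof -
    define h where "h = hs_norm k (Suc e) A"
    have h0: "0 \<le> h" by (simp add: h_def hs_nonneg)
    have "(h^2) powr (p/2) = (h powr 2) powr (p/2)" using h0 by simp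
    also have "\<dots> = h powr p" by (simp add: powr_powr)
    finally have h2: "(h^2) powr (p/2) = h powr p" .
    have c: "(C powr (2/p)) powr (p/2) = C" using C0 p by (simp add: powr_powr)
    show ?thesis unfolding h_def[symmetric] by (simp add: powr_mult c h2)
  qed
  finally have sb2: "(\<Sum>l<k. (\<integral>\<omega>. \<bar>D l \<omega>\<bar> powr p \<partial>M) powr (2/p)) powr (p/2)
      \<le> C * real (Suc e) powr (p/2) * hs_norm k (Suc e) A powr p" .
  have K0: "0 \<le> Km a" using Km_props[OF p] by simp
  have "(\<integral>\<omega>. \<bar>S k \<omega>\<bar> powr p \<partial>M) \<le> Km a * (C * real (Suc e) powr (p/2) * hs_norm k (Suc e) A powr p)"
    using mart sb2 K0 by (meson mult_left_mono order_trans)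
  also have "\<dots> = Dc a p (Suc e) * \<mu>^Suc e * hs_norm k (Suc e) A powr p"
    by (simp add: Dc_Suc C_def mult_ac)
  finally show ?case using mart by (simp add: decomp)
qed



lemma dyadic_pw:
  fixes b p y :: real
  assumes b: "b > 0" and p: "0 \<le> p"
  shows "ennreal (\<bar>y\<bar> powr p) \<le> ennreal (b powr p) +
     (\<Sum>k. ennreal ((b * exp (real k + 1)) powr p) * indicator {z. b * exp (real k) \<le> \<bar>z\<bar>} y)"
proof (cases "\<bar>y\<bar> < b")
  case True
  then have "\<bar>y\<bar> powr p \<le> b powr p" using p by (intro powr_mono2) auto
  then have "ennreal (\<bar>y\<bar> powr p) \<le> ennreal (b powr p)" by (rule ennreal_leI)
  then show ?thesis by (rule order_trans) simp
next
  case False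
  define r where "r = ln (\<bar>y\<bar> / b)"
  have r0: "0 \<le> r" using False b by (simp add: r_def)
  define k where "k = nat \<lfloor>r\<rfloor>"
  have k1: "real k \<le> r" "r < real k + 1" using r0 by (auto simp: k_def)
  have yr: "\<bar>y\<bar> = b * exp r" using False b by (simp add: r_def)
  have "b * exp (real k) \<le> \<bar>y\<bar>" using k1 b yr by simp
  then have ind: "indicator {z. b * exp (real k) \<le> \<bar>z\<bar>} y = (1::ennreal)" by simp
  have "\<bar>y\<bar> \<le> b * exp (real k + 1)" using k1 b yr by simp
  then have "\<bar>y\<bar> powr p \<le> (b * exp (real k + 1)) powr p" using p by (intro powr_mono2) auto
  then have "ennreal (\<bar>y\<bar> powr p) \<le> ennreal ((b * exp (real k + 1)) powr p) * indicator {z. b * exp (real k) \<le> \<bar>z\<bar>} y"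
    using ind by (simp add: ennreal_leI)
  also have "\<dots> \<le> (\<Sum>k. ennreal ((b * exp (real k + 1)) powr p) * indicator {z. b * exp (real k) \<le> \<bar>z\<bar>} y)"
  proof -
    define f where "f = (\<lambda>k. ennreal ((b * exp (real k + 1)) powr p) * indicator {z. b * exp (real k) \<le> \<bar>z\<bar>} y)"
    have "sum f {k} \<le> suminf f" by (rule sum_le_suminf) (auto intro: summableI)
    then have "f k \<le> suminf f" by simp
    then show ?thesis unfolding f_def .
  qed
  finally show ?thesis by (rule order_trans) simp
qed

definition Gc :: "real \<Rightarrow> real" where "Gc a = 1 + exp a"

lemma (in prob_space) tail_moment:
  fixes Y :: "'a \<Rightarrow> real"
  assumes Ym: "Y \<in> borel_measurable M" and b: "b > 0" and p: "0 \<le> p" "p < a" and a1: "1 \<le> a"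
    and tail: "\<And>t. t \<ge> b \<Longrightarrow> measure M {\<omega>\<in>space M. \<bar>Y \<omega>\<bar> \<ge> t} \<le> (b / t) powr a"
  shows "integrable M (\<lambda>\<omega>. \<bar>Y \<omega>\<bar> powr p) \<and>
     (\<integral>\<omega>. \<bar>Y \<omega>\<bar> powr p \<partial>M) \<le> b powr p * Gc a * (a / (a - p))"
proof -
  define A where "A k = {\<omega>\<in>space M. b * exp (real k) \<le> \<bar>Y \<omega>\<bar>}" for k :: nat
  define c where "c k = (b * exp (real k + 1)) powr p" for k :: nat
  define \<epsilon> where "\<epsilon> = a - p"
  have e: "\<epsilon> > 0" using p by (simp add: \<epsilon>_def)
  define q where "q = exp (- \<epsilon>)"
  have q: "0 < q" "q < 1" using e by (auto simp: q_def)
  have Am: "A k \<in> sets M" for k unfolding A_def using Ym by measurable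
  have PA: "measure M (A k) \<le> exp (- real k * a)" for k
  proof -
    have "measure M (A k) \<le> (b / (b * exp (real k))) powr a"
      unfolding A_def using b by (intro tail) (simp add: mult_le_cancel_left1)
    also have "\<dots> = exp (- real k * a)" using b by (simp add: powr_def ln_div exp_minus field_simps)
    finally show ?thesis .
  qed
  have ck: "c k * exp (- real k * a) = b powr p * exp p * q ^ k" for k
  proof -
    have "c k = b powr p * exp (p * (real k + 1))" using b by (simp add: c_def powr_mult exp_powr_real mult.commute)
    moreover have "q ^ k = exp (- \<epsilon> * real k)" by (simp add: q_def exp_of_nat_mult[symmetric] mult.commute)
    ultimately show ?thesis unfolding \<epsilon>_def by (simp add: exp_add[symmetric] algebra_simps mult_exp_exp)
  qed
  have "(\<integral>\<^sup>+\<omega>. ennreal (\<bar>Y \<omega>\<bar> powr p) \<partial>M)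
      \<le> (\<integral>\<^sup>+\<omega>. ennreal (b powr p) + (\<Sum>k. ennreal (c k) * indicator (A k) \<omega>) \<partial>M)"
  proof (rule nn_integral_mono)
    fix \<omega> assume "\<omega> \<in> space M"
    then have "indicator (A k) \<omega> = (indicator {z. b * exp (real k) \<le> \<bar>z\<bar>} (Y \<omega>) :: ennreal)" for k
      by (simp add: A_def indicator_def)
    then show "ennreal (\<bar>Y \<omega>\<bar> powr p) \<le> ennreal (b powr p) + (\<Sum>k. ennreal (c k) * indicator (A k) \<omega>)"
      using dyadic_pw[OF b p(1), of "Y \<omega>"] by (simp add: c_def)
  qed
  also have "\<dots> = ennreal (b powr p) + (\<Sum>k. ennreal (c k) * emeasure M (A k))"
    using Am by (simp add: nn_integral_add nn_integral_suminf nn_integral_cmult_indicator emeasure_space_1)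
  also have "(\<Sum>k. ennreal (c k) * emeasure M (A k)) \<le> (\<Sum>k. ennreal (b powr p * exp p * q ^ k))"
  proof (intro suminf_le allI)
    fix k
    have "ennreal (c k) * emeasure M (A k) = ennreal (c k * measure M (A k))"
      by (simp add: emeasure_eq_measure ennreal_mult c_def)
    also have "\<dots> \<le> ennreal (c k * exp (- real k * a))"
      using PA by (intro ennreal_leI mult_left_mono) (auto simp: c_def)
    finally show "ennreal (c k) * emeasure M (A k) \<le> ennreal (b powr p * exp p * q ^ k)" using ck[of k] by simp
  qed (auto intro: summableI)
  also have "(\<Sum>k. ennreal (b powr p * exp p * q ^ k)) = ennreal (b powr p * exp p * (1 / (1 - q)))"
  proof -
    have "summable (\<lambda>k. b powr p * exp p * q ^ k)" using q by (intro summable_mult summable_geometric) auto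
    then have "(\<Sum>k. ennreal (b powr p * exp p * q ^ k)) = ennreal (\<Sum>k. b powr p * exp p * q ^ k)"
      using q by (intro suminf_ennreal2) auto
    also have "(\<Sum>k. b powr p * exp p * q ^ k) = b powr p * exp p * (1 / (1 - q))"
      using q by (simp add: suminf_mult suminf_geometric)
    finally show ?thesis .
  qed
  finally have nn: "(\<integral>\<^sup>+\<omega>. ennreal (\<bar>Y \<omega>\<bar> powr p) \<partial>M) \<le> ennreal (b powr p + b powr p * exp p * (1 / (1 - q)))"
    using q by (simp add: ennreal_plus[symmetric] del: ennreal_plus)
  have meas: "(\<lambda>\<omega>. \<bar>Y \<omega>\<bar> powr p) \<in> borel_measurable M" using Ym by measurable
  have int: "integrable M (\<lambda>\<omega>. \<bar>Y \<omega>\<bar> powr p)"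
  proof (rule integrableI_bounded[OF meas])
    show "(\<integral>\<^sup>+\<omega>. ennreal (norm (\<bar>Y \<omega>\<bar> powr p)) \<partial>M) < \<infinity>"
      using nn by (simp add: le_less_trans)
  qed
  have "ennreal (\<integral>\<omega>. \<bar>Y \<omega>\<bar> powr p \<partial>M) \<le> ennreal (b powr p + b powr p * exp p * (1 / (1 - q)))"
    using nn nn_integral_eq_integral[OF int] by simp
  then have I: "(\<integral>\<omega>. \<bar>Y \<omega>\<bar> powr p \<partial>M) \<le> b powr p + b powr p * exp p * (1 / (1 - q))"
    using q by (subst (asm) ennreal_le_iff) (auto intro!: add_nonneg_nonneg)
  have "1 / (1 - q) \<le> exp \<epsilon> / \<epsilon>"
  proof -
    have "1 + \<epsilon> \<le> exp \<epsilon>" by (rule exp_ge_add_one_self)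
    have eq: "1 / (1 - q) = exp \<epsilon> / (exp \<epsilon> - 1)"
      using e by (simp add: q_def exp_minus field_simps)
    have "exp \<epsilon> - 1 \<ge> \<epsilon>" using \<open>1 + \<epsilon> \<le> exp \<epsilon>\<close> by linarith
    then show ?thesis unfolding eq using e by (intro divide_left_mono) auto
  qed
  then have "exp p * (1 / (1 - q)) \<le> exp p * (exp \<epsilon> / \<epsilon>)" by (intro mult_left_mono) auto
  also have "\<dots> = exp a / \<epsilon>" by (simp add: \<epsilon>_def mult_exp_exp)
  also have "\<dots> \<le> exp a * (a / \<epsilon>)" using e a1 by (simp add: divide_right_mono field_simps)
  finally have r1: "exp p * (1 / (1 - q)) \<le> exp a * (a / \<epsilon>)" .
  have r2: "1 \<le> a / \<epsilon>" using e p by (simp add: \<epsilon>_def field_simps)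
  have "1 + exp p * (1 / (1 - q)) \<le> Gc a * (a / \<epsilon>)" using r1 r2 by (simp add: Gc_def algebra_simps)
  then have "b powr p * (1 + exp p * (1 / (1 - q))) \<le> b powr p * (Gc a * (a / \<epsilon>))"
    by (intro mult_left_mono) auto
  then show ?thesis using int I by (simp add: \<epsilon>_def algebra_simps)
qed



definition C1c :: "real \<Rightarrow> nat \<Rightarrow> real" where
  "C1c a d = Km a ^ d * sqrt (fact d) * Gc a ^ d"

lemma C1c_ge1: "2 < a \<Longrightarrow> 1 \<le> C1c a d"
proof -
  assume a: "2 < a"
  have K: "1 \<le> Km a" using Km_props[of 2 a] a by auto
  have G: "1 \<le> Gc a" by (simp add: Gc_def)
  have "1 \<le> Km a ^ d" using K by simp
  moreover have "1 \<le> sqrt (fact d)" by simp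
  moreover have "1 \<le> Gc a ^ d" using G by simp
  ultimately show ?thesis unfolding C1c_def by (metis mult_mono' mult_1 one_le_power zero_le_one order_trans)
qed

lemma (in prob_space) Lp_part:
  fixes X :: "nat \<Rightarrow> 'a \<Rightarrow> real"
  assumes a: "2 < a" and p: "2 \<le> p" "p < a" and b: "b > 0"
   and Xm: "\<And>i. i < n \<Longrightarrow> X i \<in> borel_measurable M"
   and ind: "indep_vars (\<lambda>_. borel) X {..<n}"
   and Xc: "\<And>i. i < n \<Longrightarrow> integrable M (X i)" "\<And>i. i < n \<Longrightarrow> expectation (X i) = 0"
   and tail: "\<And>i t. i < n \<Longrightarrow> t \<ge> b \<Longrightarrow> measure M {\<omega>\<in>space M. \<bar>X i \<omega>\<bar> \<ge> t} \<le> (b / t) powr a"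
   and A: "gen_diag_zero n d A"
  shows "integrable M (\<lambda>\<omega>. \<bar>chaos n d A X \<omega>\<bar> powr p) \<and>
     Lp_norm M p (chaos n d A X) \<le> C1c a d * hs_norm n d A * b ^ d * (a / (a - p)) powr (real d / p)"
proof -
  define \<mu> where "\<mu> = b powr p * Gc a * (a / (a - p))"
  have Gp: "1 \<le> Gc a" by (simp add: Gc_def)
  have mu: "0 < \<mu>" unfolding \<mu>_def using b Gp p by (intro mult_pos_pos) auto
  have TM: "integrable M (\<lambda>\<omega>. \<bar>X i \<omega>\<bar> powr p) \<and> (\<integral>\<omega>. \<bar>X i \<omega>\<bar> powr p \<partial>M) \<le> \<mu>" if i: "i < n" for i
    unfolding \<mu>_def using p a by (intro tail_moment Xm[OF i] b tail[OF i]) auto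
  have MB: "integrable M (\<lambda>\<omega>. \<bar>gch n d A (\<lambda>i. X i \<omega>)\<bar> powr p) \<and>
     (\<integral>\<omega>. \<bar>gch n d A (\<lambda>i. X i \<omega>)\<bar> powr p \<partial>M) \<le> Dc a p d * \<mu>^d * hs_norm n d A powr p"
    by (rule moment_bound[of p a n X \<mu> n d A]) (use p Xm ind Xc TM mu A in auto)
  have ch: "chaos n d A X = (\<lambda>\<omega>. gch n d A (\<lambda>i. X i \<omega>))" by (simp add: chaos_gch fun_eq_iff)
  define E where "E = (\<integral>\<omega>. \<bar>chaos n d A X \<omega>\<bar> powr p \<partial>M)"
  have E: "E \<le> Dc a p d * \<mu>^d * hs_norm n d A powr p" using MB by (simp add: E_def ch)
  have E0: "0 \<le> E" unfolding E_def by (intro integral_nonneg_AE) auto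
  define h where "h = hs_norm n d A"
  have h0: "0 \<le> h" by (simp add: h_def hs_nonneg)
  have Dp: "0 \<le> Dc a p d" using Dc_nonneg[of p a] p by simp
  have "Lp_norm M p (chaos n d A X) = E powr (1/p)" by (simp add: Lp_norm_def E_def)
  also have "\<dots> \<le> (Dc a p d * \<mu>^d * h powr p) powr (1/p)"
    using E E0 p by (intro powr_mono2) (auto simp: h_def)
  also have "\<dots> = Dc a p d powr (1/p) * (\<mu>^d) powr (1/p) * h"
  proof -
    have "(h powr p) powr (1/p) = h" using h0 p by (simp add: powr_powr)
    then show ?thesis by (simp add: powr_mult)
  qed
  finally have step1: "Lp_norm M p (chaos n d A X) \<le> Dc a p d powr (1/p) * (\<mu>^d) powr (1/p) * h" .
  have d1: "Dc a p d powr (1/p) \<le> Km a ^ d * sqrt (fact d)"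
  proof -
    have K1: "1 \<le> Km a ^ d" using Km_props[of p a] p by simp
    have "Dc a p d powr (1/p) = (Km a ^ d) powr (1/p) * (fact d powr (p/2)) powr (1/p)"
      by (simp add: Dc_def powr_mult)
    also have "(fact d powr (p/2)) powr (1/p) = sqrt (fact d)"
      using p by (simp add: powr_powr powr_half_sqrt[symmetric])
    also have "(Km a ^ d) powr (1/p) \<le> (Km a ^ d) powr 1"
      using K1 p by (intro powr_mono) auto
    finally show ?thesis using K1 by (simp add: mult_right_mono)
  qed
  have m1: "(\<mu>^d) powr (1/p) = b ^ d * Gc a powr (real d / p) * (a / (a - p)) powr (real d / p)"
  proof -
    have "(\<mu>^d) powr (1/p) = (\<mu> powr real d) powr (1/p)" using mu by (simp add: powr_realpow)
    also have "\<dots> = \<mu> powr (real d / p)" by (simp add: powr_powr)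
    also have "\<dots> = (b powr p) powr (real d / p) * Gc a powr (real d / p) * (a / (a - p)) powr (real d / p)"
      by (simp only: \<mu>_def powr_mult)
    also have "(b powr p) powr (real d / p) = b ^ d" using b p by (simp add: powr_powr powr_realpow)
    finally show ?thesis .
  qed
  have g1: "Gc a powr (real d / p) \<le> Gc a ^ d"
  proof -
    have "real d \<le> p * real d" using p by (intro mult_le_cancel_right1[THEN iffD2]) auto
    then have "real d / p \<le> real d" using p by (simp add: field_simps)
    then have "Gc a powr (real d / p) \<le> Gc a powr real d" using Gp by (intro powr_mono) auto
    then show ?thesis using Gp by (simp add: powr_realpow)
  qed
  have "b ^ d * Gc a powr (real d / p) * (a / (a - p)) powr (real d / p) \<le> b ^ d * Gc a ^ d * (a / (a - p)) powr (real d / p)"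
    using g1 b by (intro mult_right_mono mult_left_mono) auto
  then have "Dc a p d powr (1/p) * (\<mu>^d) powr (1/p) \<le> Km a ^ d * sqrt (fact d) * (b ^ d * Gc a ^ d * (a / (a - p)) powr (real d / p))"
    unfolding m1 by (rule mult_mono[OF d1]) (use b Km_props[of p a] p in auto)
  then have "Lp_norm M p (chaos n d A X) \<le> Km a ^ d * sqrt (fact d) * (b ^ d * Gc a ^ d * (a / (a - p)) powr (real d / p)) * h"
    using step1 h0 by (meson mult_right_mono order_trans)
  then have "Lp_norm M p (chaos n d A X) \<le> C1c a d * hs_norm n d A * b ^ d * (a / (a - p)) powr (real d / p)"
    by (simp add: C1c_def h_def mult_ac)
  then show ?thesis using MB by (simp add: ch)
qed



definition Cc :: "real \<Rightarrow> nat \<Rightarrow> real" where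
  "Cc a d = C1c a d powr a * a ^ d * exp 1 * exp (1 / (a - 2))"

lemma Cc_props:
  assumes a: "2 < a"
  shows "C1c a d \<le> Cc a d" "exp (1 + 1/(a - 2)) \<le> Cc a d" "0 < Cc a d"
proof -
  have C1: "1 \<le> C1c a d" using C1c_ge1[OF a] .
  have ad: "1 \<le> a ^ d" using a by simp
  have P: "1 \<le> C1c a d powr a" using C1 a by (intro ge_one_powr_ge_zero) auto
  have "C1c a d = C1c a d powr 1" using C1 by simp
  also have "\<dots> \<le> C1c a d powr a" using C1 a by (intro powr_mono) auto
  finally have Q: "C1c a d \<le> C1c a d powr a" .
  have x1: "1 \<le> exp (1::real)" "1 \<le> exp (1 / (a - 2))" using a by auto
  have e1: "1 \<le> exp 1 * exp (1 / (a - 2))" using mult_mono[OF x1] by simp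
  have "C1c a d powr a \<le> C1c a d powr a * a ^ d" using P ad by (simp add: mult_le_cancel_left1)
  also have "\<dots> \<le> C1c a d powr a * a ^ d * (exp 1 * exp (1 / (a - 2)))"
    using mult_left_mono[OF e1, of "C1c a d powr a * a ^ d"] P ad by simp
  finally show "C1c a d \<le> Cc a d" using Q by (simp add: Cc_def mult_ac)
  have "exp (1 + 1/(a - 2)) = 1 * (exp 1 * exp (1 / (a - 2)))" by (simp add: exp_add)
  also have "\<dots> \<le> (C1c a d powr a * a ^ d) * (exp 1 * exp (1 / (a - 2)))"
  proof -
    have "1 \<le> C1c a d powr a * a ^ d" using mult_mono[OF P ad] by simp
    then show ?thesis using e1 by (intro mult_right_mono) auto
  qed
  finally show "exp (1 + 1/(a - 2)) \<le> Cc a d" by (simp add: Cc_def mult_ac)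
  show "0 < Cc a d" using P ad unfolding Cc_def by (intro mult_pos_pos) auto
qed

lemma (in prob_space) tail_part:
  fixes X :: "nat \<Rightarrow> 'a \<Rightarrow> real"
  assumes a: "2 < a" and b: "b > 0"
   and Xm: "\<And>i. i < n \<Longrightarrow> X i \<in> borel_measurable M"
   and ind: "indep_vars (\<lambda>_. borel) X {..<n}"
   and Xc: "\<And>i. i < n \<Longrightarrow> integrable M (X i)" "\<And>i. i < n \<Longrightarrow> expectation (X i) = 0"
   and tail: "\<And>i t. i < n \<Longrightarrow> t \<ge> b \<Longrightarrow> measure M {\<omega>\<in>space M. \<bar>X i \<omega>\<bar> \<ge> t} \<le> (b / t) powr a"
   and A: "gen_diag_zero n d A"
   and t: "t > 0" "t \<ge> Cc a d * hs_norm n d A * b ^ d"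
  shows "measure M {\<omega>\<in>space M. \<bar>chaos n d A X \<omega>\<bar> \<ge> t}
          \<le> Cc a d * (ln (t / (hs_norm n d A * b ^ d))) ^ d * ((hs_norm n d A * b ^ d) / t) powr a"
proof (cases "hs_norm n d A = 0")
  case True
  then have "(\<Sum>ks\<in>tensor_indices n d. (A ks)^2) = 0" using hs_sq[of n d A] by simp
  then have Az: "A ks = 0" if "ks \<in> tensor_indices n d" for ks
    using that by (subst (asm) sum_nonneg_eq_0_iff) auto
  have "chaos n d A X \<omega> = 0" for \<omega> unfolding chaos_def using Az by simp
  then have se: "{\<omega>\<in>space M. \<bar>chaos n d A X \<omega>\<bar> \<ge> t} = {}" using t by auto
  have "measure M {\<omega>\<in>space M. \<bar>chaos n d A X \<omega>\<bar> \<ge> t} = 0" by (simp only: se measure_empty)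
  then show ?thesis using True a by simp
next
  case False
  define C where "C = Cc a d"
  define C1 where "C1 = C1c a d"
  define h where "h = hs_norm n d A"
  define H where "H = h * b ^ d"
  have h: "h > 0" using False hs_nonneg[of n d A] by (simp add: h_def)
  have H: "H > 0" using h b by (simp add: H_def)
  define u where "u = t / H"
  have uC: "C \<le> u" using t H by (simp add: u_def C_def H_def h_def field_simps mult.commute)
  have C1: "1 \<le> C1" unfolding C1_def by (rule C1c_ge1[OF a])
  have Cpos: "0 < C" using Cc_props[OF a] by (simp add: C_def)
  have u0: "0 < u" using uC Cpos by simp
  define L where "L = ln u"
  have "1 + 1/(a - 2) \<le> L"
  proof -
    have "exp (1 + 1/(a - 2)) \<le> u" using Cc_props(2)[OF a, of d] uC by (simp add: C_def)
    then show ?thesis unfolding L_def using u0 by (simp add: ln_ge_iff)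
  qed
  moreover have "0 < 1/(a - 2)" using a by simp
  ultimately have L1: "1 \<le> L" and La: "1/(a - 2) \<le> L" by linarith+
  have Lp: "0 < L" using L1 by simp
  define p where "p = a - 1/L"
  have pa: "p < a" using Lp by (simp add: p_def)
  have p2: "2 \<le> p"
  proof -
    have "1/L \<le> a - 2" using La a Lp by (simp add: field_simps)
    then show ?thesis by (simp add: p_def)
  qed
  have ap: "a / (a - p) = a * L" using Lp by (simp add: p_def)
  have LPP: "integrable M (\<lambda>\<omega>. \<bar>chaos n d A X \<omega>\<bar> powr p) \<and>
     Lp_norm M p (chaos n d A X) \<le> C1 * H * (a * L) powr (real d / p)"
    using Lp_part[OF a p2 pa b Xm ind Xc tail A] by (simp add: C1_def H_def h_def ap mult_ac)
  define E where "E = (\<integral>\<omega>. \<bar>chaos n d A X \<omega>\<bar> powr p \<partial>M)"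
  have E0: "0 \<le> E" unfolding E_def by (intro integral_nonneg_AE) auto
  have "E = (E powr (1/p)) powr p" using E0 p2 by (simp add: powr_powr)
  also have "\<dots> \<le> (C1 * H * (a * L) powr (real d / p)) powr p"
    using LPP p2 by (intro powr_mono2) (auto simp: Lp_norm_def E_def)
  also have "\<dots> = C1 powr p * H powr p * (a * L) powr real d"
    using p2 by (simp add: powr_mult powr_powr)
  finally have EB: "E \<le> C1 powr p * H powr p * (a * L) powr real d" .
  have meas: "(\<lambda>\<omega>. \<bar>chaos n d A X \<omega>\<bar> powr p) \<in> borel_measurable M"
    using LPP by auto
  have set_eq: "{\<omega>\<in>space M. \<bar>chaos n d A X \<omega>\<bar> \<ge> t} = {\<omega>\<in>space M. \<bar>chaos n d A X \<omega>\<bar> powr p \<ge> t powr p}"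
  proof -
    have "t \<le> y \<longleftrightarrow> t powr p \<le> y powr p" if "0 \<le> y" for y :: real
    proof
      assume "t \<le> y" then show "t powr p \<le> y powr p" using t p2 by (intro powr_mono2) auto
    next
      assume h: "t powr p \<le> y powr p"
      show "t \<le> y"
      proof (rule ccontr)
        assume "\<not> t \<le> y"
        then have "y powr p < t powr p" using that p2 by (intro powr_less_mono2) auto
        then show False using h by simp
      qed
    qed
    then show ?thesis by auto
  qed
  have "measure M {\<omega>\<in>space M. \<bar>chaos n d A X \<omega>\<bar> \<ge> t} \<le> E / t powr p"
    unfolding set_eq E_def using LPP t
    by (intro integral_Markov_inequality_measure[where A="space M"]) auto
  also have "\<dots> \<le> C1 powr p * H powr p * (a * L) powr real d / t powr p"
    using EB t by (intro divide_right_mono) auto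
  also have "\<dots> = C1 powr p * (a * L) powr real d * (H / t) powr p"
    using H t by (simp add: powr_divide field_simps)
  also have "(H / t) powr p = (H / t) powr a * exp 1"
  proof -
    have "(H / t) powr p = (H / t) powr a * (H / t) powr (- (1/L))"
      by (simp add: p_def powr_add[symmetric])
    also have "(H / t) powr (- (1/L)) = u powr (1/L)"
      using H t by (simp add: u_def powr_minus_divide powr_divide)
    also have "u powr (1/L) = exp 1" using u0 Lp by (simp add: powr_def L_def)
    finally show ?thesis .
  qed
  also have "C1 powr p * (a * L) powr real d * ((H / t) powr a * exp 1)
      \<le> C1 powr a * (a ^ d * L ^ d) * ((H / t) powr a * exp 1)"
  proof -
    have "C1 powr p \<le> C1 powr a" using C1 pa by (intro powr_mono) auto
    moreover have "(a * L) powr real d = a ^ d * L ^ d"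
      using a Lp by (simp add: powr_realpow power_mult_distrib)
    ultimately show ?thesis using a Lp by (intro mult_right_mono) (auto intro!: mult_right_mono)
  qed
  also have "\<dots> = (C1 powr a * a ^ d * exp 1) * L ^ d * (H / t) powr a" by (simp add: mult_ac)
  also have "\<dots> \<le> C * L ^ d * (H / t) powr a"
  proof -
    have "C1 powr a * a ^ d * exp 1 \<le> C1 powr a * a ^ d * exp 1 * exp (1 / (a - 2))"
    proof -
      have "0 \<le> C1 powr a * a ^ d * exp 1" using a by simp
      moreover have "1 \<le> exp (1 / (a - 2))" using a by simp
      ultimately show ?thesis using mult_left_mono[of 1 "exp (1 / (a - 2))" "C1 powr a * a ^ d * exp 1"] by simp
    qed
    then have "C1 powr a * a ^ d * exp 1 \<le> C" by (simp add: C_def Cc_def C1_def)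
    then show ?thesis using L1 by (intro mult_right_mono) auto
  qed
  finally show ?thesis by (simp add: C_def L_def u_def H_def h_def)
qed


theorem proposition3p1:
  fixes d :: nat and \<alpha> :: real
  assumes "d \<ge> 1" and "\<alpha> > 2"
  shows "\<exists>C>0. \<forall>(M :: 'a measure) n (X :: nat \<Rightarrow> 'a \<Rightarrow> real) b (A :: nat list \<Rightarrow> real).
    prob_space M \<longrightarrow> n \<ge> 1 \<longrightarrow> b > 0 \<longrightarrow>
    (\<forall>i<n. X i \<in> borel_measurable M) \<longrightarrow>
    prob_space.indep_vars M (\<lambda>_. borel) X {..<n} \<longrightarrow>
    (\<forall>i<n. integrable M (X i) \<and> prob_space.expectation M (X i) = 0) \<longrightarrow>
    (\<forall>i<n. \<forall>t\<ge>b. measure M {\<omega>\<in>space M. \<bar>X i \<omega>\<bar> \<ge> t} \<le> (b / t) powr \<alpha>) \<longrightarrow>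
    gen_diag_zero n d A \<longrightarrow>
    (\<forall>p. 2 \<le> p \<and> p < \<alpha> \<longrightarrow>
        integrable M (\<lambda>\<omega>. \<bar>chaos n d A X \<omega>\<bar> powr p) \<and>
        Lp_norm M p (chaos n d A X)
          \<le> C * hs_norm n d A * b ^ d * (\<alpha> / (\<alpha> - p)) powr (real d / p)) \<and>
    (\<forall>t. t > 0 \<and> t \<ge> C * hs_norm n d A * b ^ d \<longrightarrow>
        measure M {\<omega>\<in>space M. \<bar>chaos n d A X \<omega>\<bar> \<ge> t}
          \<le> C * (ln (t / (hs_norm n d A * b ^ d))) ^ d
               * ((hs_norm n d A * b ^ d) / t) powr \<alpha>)"
proof -
  have main: "(\<forall>p. 2 \<le> p \<and> p < \<alpha> \<longrightarrow>
        integrable M (\<lambda>\<omega>. \<bar>chaos n d A X \<omega>\<bar> powr p) \<and>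
        Lp_norm M p (chaos n d A X)
          \<le> Cc \<alpha> d * hs_norm n d A * b ^ d * (\<alpha> / (\<alpha> - p)) powr (real d / p)) \<and>
    (\<forall>t. t > 0 \<and> t \<ge> Cc \<alpha> d * hs_norm n d A * b ^ d \<longrightarrow>
        measure M {\<omega>\<in>space M. \<bar>chaos n d A X \<omega>\<bar> \<ge> t}
          \<le> Cc \<alpha> d * (ln (t / (hs_norm n d A * b ^ d))) ^ d
               * ((hs_norm n d A * b ^ d) / t) powr \<alpha>)"
    if PS: "prob_space M" and b: "b > 0"
      and Xm: "\<forall>i<n. X i \<in> borel_measurable M"
      and ind: "prob_space.indep_vars M (\<lambda>_. borel) X {..<n}"
      and Xc: "\<forall>i<n. integrable M (X i) \<and> prob_space.expectation M (X i) = 0"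
      and tl: "\<forall>i<n. \<forall>t\<ge>b. measure M {\<omega>\<in>space M. \<bar>X i \<omega>\<bar> \<ge> t} \<le> (b / t) powr \<alpha>"
      and A: "gen_diag_zero n d A"
    for M :: "'a measure" and n X b A
  proof -
    interpret prob_space M by (rule PS)
    have Xm': "\<And>i. i < n \<Longrightarrow> X i \<in> borel_measurable M" using Xm by auto
    have Xc1: "\<And>i. i < n \<Longrightarrow> integrable M (X i)" using Xc by auto
    have Xc2: "\<And>i. i < n \<Longrightarrow> expectation (X i) = 0" using Xc by auto
    have tl': "\<And>i t. i < n \<Longrightarrow> t \<ge> b \<Longrightarrow> measure M {\<omega>\<in>space M. \<bar>X i \<omega>\<bar> \<ge> t} \<le> (b / t) powr \<alpha>"
      using tl by auto
    have a: "2 < \<alpha>" using assms by simp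
    show ?thesis
    proof (intro conjI allI impI)
      fix p assume pp: "2 \<le> p \<and> p < \<alpha>"
      have LP: "integrable M (\<lambda>\<omega>. \<bar>chaos n d A X \<omega>\<bar> powr p) \<and>
         Lp_norm M p (chaos n d A X) \<le> C1c \<alpha> d * hs_norm n d A * b ^ d * (\<alpha> / (\<alpha> - p)) powr (real d / p)"
        using pp by (intro Lp_part[OF a _ _ b Xm' ind Xc1 Xc2 tl' A]) auto
      then show "integrable M (\<lambda>\<omega>. \<bar>chaos n d A X \<omega>\<bar> powr p)" by simp
      have "C1c \<alpha> d * (hs_norm n d A * b ^ d * (\<alpha> / (\<alpha> - p)) powr (real d / p))
          \<le> Cc \<alpha> d * (hs_norm n d A * b ^ d * (\<alpha> / (\<alpha> - p)) powr (real d / p))"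
        using Cc_props(1)[OF a, of d] b hs_nonneg[of n d A] by (intro mult_right_mono) auto
      then show "Lp_norm M p (chaos n d A X) \<le> Cc \<alpha> d * hs_norm n d A * b ^ d * (\<alpha> / (\<alpha> - p)) powr (real d / p)"
        using LP by (simp add: mult.assoc)
    next
      fix t assume tt: "t > 0 \<and> t \<ge> Cc \<alpha> d * hs_norm n d A * b ^ d"
      show "measure M {\<omega>\<in>space M. \<bar>chaos n d A X \<omega>\<bar> \<ge> t}
          \<le> Cc \<alpha> d * (ln (t / (hs_norm n d A * b ^ d))) ^ d * ((hs_norm n d A * b ^ d) / t) powr \<alpha>"
        using tt by (intro tail_part[OF a b Xm' ind Xc1 Xc2 tl' A]) auto
    qed
  qed
  show ?thesis
    apply (rule exI[of _ "Cc \<alpha> d"])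
    apply (rule conjI)
     apply (rule Cc_props(3))
     apply (use assms in simp)
    apply (intro allI impI)
    apply (rule main)
          apply assumption+
    done
qed

end
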